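(* Assume (C1) and (C2). Let $m_*:=\inf_{u\in\mathcal{M}}I(u)$ and $c_*:=\inf_{u\in\mathcal{N}}I(u)$. Then $m_*>0$ and $c_*>0$, and both infima are achieved: there exist $u_0\in\mathcal{M}$ with $I(u_0)=m_*$ and $\bar u\in\mathcal{N}$ with $I(\bar u)=c_*$.
   Context: Fix real numbers $p,q,r$ with $1<p<q$, $\frac p2$ a positive integer, and $r\ge1$, and functions $a,b,c:\mathbb{Z}\to(0,+\infty)$. Conditions: - (C1) There is $b_0>0$ with $b(n)\ge b_0$ for all $n$ and $b(n)\to+\infty$ as $|n|\to\infty$. - (C2) There is $c_0>0$ with $c(n)\le c_0$ for all $n$ and $\sum_n c(n)<+\infty$. Notation for a real sequence $u=(u(n))_{n\in\mathbb{Z}}$: $\Delta u(n)=u(n+1)-u(n)$, $u^+(n)=\max\{u(n),0\}$, $u^-(n)=\min\{u(n),0\}$. Spaces: - $E$ is the set of real sequences $u$ with $\|u\|:=\big(\sum_n[a(n)|\Delta u(n)|^p+b(n)|u(n)|^p]\big)^{1/p}<\infty$. - $\mathcal{D}=\{u\in E:\sum_n c(n)|u(n)|^q\ln|u(n)|^r<+\infty\}$, where terms with $u(n)=0$ are read as $0$. For $u,v\in\mathcal{D}$: - $I(u)=\frac1p\|u\|^p+\frac{r}{q^2}\sum_n c(n)|u(n)|^q-\frac1q\sum_n c(n)|u(n)|^q\ln|u(n)|^r$. - $\langle I'(u),v\rangle=\sum_n[a(n)|\Delta u(n)|^{p-2}\Delta u(n)\Delta v(n)+b(n)|u(n)|^{p-2}u(n)v(n)]-\sum_n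 c(n)|u(n)|^{q-2}u(n)v(n)\ln|u(n)|^r$. Sets: - $\mathcal{N}=\{u\in\mathcal{D}:u\ne0,\ \langle I'(u),u\rangle=0\}$. - $\mathcal{M}=\{u\in\mathcal{D}:u^+\ne0,\ u^-\neq0,\ \langle I'(u),u^+\rangle=0,\ \langle I'(u),u^-\rangle=0\}$. *)

theory Defs
  imports "HOL-Analysis.Analysis"
begin

definition fdiff :: "(int \<Rightarrow> real) \<Rightarrow> int \<Rightarrow> real" where
  "fdiff u n = u (n + 1) - u n"

definition posp :: "(int \<Rightarrow> real) \<Rightarrow> int \<Rightarrow> real" where
  "posp u n = max (u n) 0"

definition negp :: "(int \<Rightarrow> real) \<Rightarrow> int \<Rightarrow> real" where
  "negp u n = min (u n) 0"

definition normterm :: "real \<Rightarrow> (int \<Rightarrow> real) \<Rightarrow> (int \<Rightarrow> real) \<Rightarrow> (int \<Rightarrow> real) \<Rightarrow> int \<Rightarrow> real" where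
  "normterm p a b u n = a n * \<bar>fdiff u n\<bar> powr p + b n * \<bar>u n\<bar> powr p"

definition spaceE :: "real \<Rightarrow> (int \<Rightarrow> real) \<Rightarrow> (int \<Rightarrow> real) \<Rightarrow> (int \<Rightarrow> real) set" where
  "spaceE p a b = {u. normterm p a b u summable_on UNIV}"

definition normE :: "real \<Rightarrow> (int \<Rightarrow> real) \<Rightarrow> (int \<Rightarrow> real) \<Rightarrow> (int \<Rightarrow> real) \<Rightarrow> real" where
  "normE p a b u = (\<Sum>\<^sub>\<infinity>n. normterm p a b u n) powr (1 / p)"

definition logterm :: "real \<Rightarrow> real \<Rightarrow> (int \<Rightarrow> real) \<Rightarrow> (int \<Rightarrow> real) \<Rightarrow> int \<Rightarrow> real" where
  "logterm q r c u n = (if u n = 0 then 0 else c n * \<bar>u n\<bar> powr q * ln (\<bar>u n\<bar> powr r))"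

definition domD :: "real \<Rightarrow> real \<Rightarrow> real \<Rightarrow> (int \<Rightarrow> real) \<Rightarrow> (int \<Rightarrow> real) \<Rightarrow> (int \<Rightarrow> real) \<Rightarrow> (int \<Rightarrow> real) set" where
  "domD p q r a b c = {u \<in> spaceE p a b. logterm q r c u summable_on UNIV}"

definition funcI :: "real \<Rightarrow> real \<Rightarrow> real \<Rightarrow> (int \<Rightarrow> real) \<Rightarrow> (int \<Rightarrow> real) \<Rightarrow> (int \<Rightarrow> real) \<Rightarrow> (int \<Rightarrow> real) \<Rightarrow> real" where
  "funcI p q r a b c u =
     (1 / p) * normE p a b u powr p
     + (r / q\<^sup>2) * (\<Sum>\<^sub>\<infinity>n. c n * \<bar>u n\<bar> powr q)
     - (1 / q) * (\<Sum>\<^sub>\<infinity>n. logterm q r c u n)"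

definition dI :: "real \<Rightarrow> real \<Rightarrow> real \<Rightarrow> (int \<Rightarrow> real) \<Rightarrow> (int \<Rightarrow> real) \<Rightarrow> (int \<Rightarrow> real) \<Rightarrow> (int \<Rightarrow> real) \<Rightarrow> (int \<Rightarrow> real) \<Rightarrow> real" where
  "dI p q r a b c u v =
     (\<Sum>\<^sub>\<infinity>n. a n * \<bar>fdiff u n\<bar> powr (p - 2) * fdiff u n * fdiff v n
             + b n * \<bar>u n\<bar> powr (p - 2) * u n * v n)
     - (\<Sum>\<^sub>\<infinity>n. (if u n = 0 then 0 else
             c n * \<bar>u n\<bar> powr (q - 2) * u n * v n * ln (\<bar>u n\<bar> powr r)))"

definition nehari :: "real \<Rightarrow> real \<Rightarrow> real \<Rightarrow> (int \<Rightarrow> real) \<Rightarrow> (int \<Rightarrow> real) \<Rightarrow> (int \<Rightarrow> real) \<Rightarrow> (int \<Rightarrow> real) set" where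
  "nehari p q r a b c = {u \<in> domD p q r a b c. u \<noteq> (\<lambda>_. 0) \<and> dI p q r a b c u u = 0}"

definition signnehari :: "real \<Rightarrow> real \<Rightarrow> real \<Rightarrow> (int \<Rightarrow> real) \<Rightarrow> (int \<Rightarrow> real) \<Rightarrow> (int \<Rightarrow> real) \<Rightarrow> (int \<Rightarrow> real) set" where
  "signnehari p q r a b c = {u \<in> domD p q r a b c. posp u \<noteq> (\<lambda>_. 0) \<and> negp u \<noteq> (\<lambda>_. 0)
      \<and> dI p q r a b c u (posp u) = 0 \<and> dI p q r a b c u (negp u) = 0}"

end

theory Submission
  imports Defs "HOL-Analysis.Analysis"
begin

lemma dom_summable:
  fixes f g :: "'a \<Rightarrow> real"
  assumes "g summable_on A" "\<And>x. x \<in> A \<Longrightarrow> \<bar>f x\<bar> \<le> g x"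
  shows "f summable_on A"
proof -
  have "(\<lambda>x. \<bar>f x\<bar>) summable_on A"
    by (rule summable_on_comparison_test[OF assms(1)]) (use assms(2) in auto)
  then show ?thesis unfolding summable_on_iff_abs_summable_on_real[of f] by simp
qed

lemma infsum_abs_le:
  fixes f g :: "'a \<Rightarrow> real"
  assumes "g summable_on A" "\<And>x. x \<in> A \<Longrightarrow> \<bar>f x\<bar> \<le> g x"
  shows "\<bar>infsum f A\<bar> \<le> infsum g A"
proof -
  have "f summable_on A" by (rule dom_summable[OF assms])
  then show ?thesis
    using norm_infsum_le[OF has_sum_infsum[OF \<open>f summable_on A\<close>] has_sum_infsum[OF assms(1)]] assms(2)
    by auto
qed

lemma infsum_split_finite:
  fixes f :: "'a \<Rightarrow> real"
  assumes "f summable_on UNIV" "finite F"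
  shows "infsum f UNIV = sum f F + infsum f (- F)"
proof -
  have "infsum f (F \<union> - F) = infsum f F + infsum f (- F)"
    by (rule infsum_Un_disjoint) (auto intro: summable_on_subset[OF assms(1)])
  then show ?thesis using assms by simp
qed

lemma tail_small:
  fixes g :: "'a \<Rightarrow> real"
  assumes "g summable_on UNIV" "e > 0"
  shows "\<exists>F. finite F \<and> \<bar>infsum g (- F)\<bar> \<le> e"
proof -
  obtain F where F: "finite F" "dist (sum g F) (infsum g UNIV) \<le> e"
    using infsum_finite_approximation[OF assms] by auto
  have "infsum g UNIV = sum g F + infsum g (- F)" by (rule infsum_split_finite[OF assms(1) F(1)])
  then show ?thesis using F by (intro exI[of _ F]) (auto simp: dist_real_def)
qed

lemma infsum_dom_conv:
  fixes f :: "'k \<Rightarrow> 'a \<Rightarrow> real" and h g :: "'a \<Rightarrow> real"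
  assumes g: "g summable_on UNIV"
    and bnd: "\<forall>\<^sub>F k in F. \<forall>n. \<bar>f k n\<bar> \<le> g n"
    and hb: "\<And>n. \<bar>h n\<bar> \<le> g n"
    and lim: "\<And>n. ((\<lambda>k. f k n) \<longlongrightarrow> h n) F"
  shows "((\<lambda>k. infsum (f k) UNIV) \<longlongrightarrow> infsum h UNIV) F"
proof (rule tendstoI)
  fix e :: real assume e: "e > 0"
  obtain A where A: "finite A" "\<bar>infsum g (- A)\<bar> \<le> e / 4"
    using tail_small[OF g, of "e/4"] e by auto
  have gA: "g summable_on (- A)" by (rule summable_on_subset[OF g]) simp
  have tl: "((\<lambda>k. sum (f k) A) \<longlongrightarrow> sum h A) F"
    by (rule tendsto_sum) (use lim in auto)
  have ev: "\<forall>\<^sub>F k in F. dist (sum (f k) A) (sum h A) < e / 4"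
    using tendstoD[OF tl, of "e/4"] e by simp
  show "\<forall>\<^sub>F k in F. dist (infsum (f k) UNIV) (infsum h UNIV) < e"
    using ev bnd
  proof eventually_elim
    case (elim k)
    have fs: "f k summable_on UNIV" by (rule dom_summable[OF g]) (use elim in auto)
    have hs: "h summable_on UNIV" by (rule dom_summable[OF g]) (use hb in auto)
    have 1: "\<bar>infsum (f k) (- A)\<bar> \<le> infsum g (- A)"
      by (rule infsum_abs_le[OF gA]) (use elim in auto)
    have 2: "\<bar>infsum h (- A)\<bar> \<le> infsum g (- A)"
      by (rule infsum_abs_le[OF gA]) (use hb in auto)
    have eq: "infsum (f k) UNIV - infsum h UNIV = (sum (f k) A - sum h A) + (infsum (f k) (- A) - infsum h (- A))"
      using infsum_split_finite[OF fs A(1)] infsum_split_finite[OF hs A(1)] by linarith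
    have d: "\<bar>sum (f k) A - sum h A\<bar> < e / 4" using elim(1) by (simp add: dist_real_def)
    have "\<bar>infsum (f k) UNIV - infsum h UNIV\<bar> \<le> \<bar>sum (f k) A - sum h A\<bar> + \<bar>infsum (f k) (- A)\<bar> + \<bar>infsum h (- A)\<bar>"
      unfolding eq by linarith
    also have "\<dots> < e" using d 1 2 A(2) by linarith
    finally show ?case by (simp add: dist_real_def)
  qed
qed

lemma infsum_fatou:
  fixes f :: "nat \<Rightarrow> 'a \<Rightarrow> real" and h :: "'a \<Rightarrow> real"
  assumes nn: "\<And>k n. 0 \<le> f k n"
    and fs: "\<And>k. f k summable_on UNIV"
    and lim: "\<And>n. (\<lambda>k. f k n) \<longlonglongrightarrow> h n"
    and limS: "(\<lambda>k. infsum (f k) UNIV) \<longlonglongrightarrow> l"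
  shows "h summable_on UNIV" "infsum h UNIV \<le> l"
proof -
  have hnn: "0 \<le> h n" for n
    by (rule tendsto_lowerbound[OF lim]) (use nn in auto)
  have fin: "sum h A \<le> l" if "finite A" for A
  proof -
    have "((\<lambda>k. sum (f k) A) \<longlongrightarrow> sum h A) sequentially"
      by (rule tendsto_sum) (use lim in auto)
    moreover have "\<forall>\<^sub>F k in sequentially. sum (f k) A \<le> infsum (f k) UNIV"
      using finite_sum_le_infsum[OF fs that] nn by auto
    ultimately show ?thesis
      using tendsto_le[OF trivial_limit_sequentially limS] by blast
  qed
  show hs: "h summable_on UNIV"
    by (rule nonneg_bdd_above_summable_on) (use hnn fin in \<open>auto simp: bdd_above_def\<close>)
  show "infsum h UNIV \<le> l"
    by (rule infsum_le_finite_sums[OF hs]) (use fin in auto)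
qed

lemma infsum_ge_term:
  fixes f :: "'a \<Rightarrow> real"
  assumes "f summable_on UNIV" "\<And>n. 0 \<le> f n"
  shows "f n \<le> infsum f UNIV"
  using finite_sum_le_infsum[OF assms(1), of "{n}"] assms(2) by auto

lemma miranda:
  fixes f g :: "real \<times> real \<Rightarrow> real"
  assumes el: "e < R"
    and cf: "continuous_on ({e..R} \<times> {e..R}) f"
    and cg: "continuous_on ({e..R} \<times> {e..R}) g"
    and f1: "\<And>t. t \<in> {e..R} \<Longrightarrow> f (e, t) > 0"
    and f2: "\<And>t. t \<in> {e..R} \<Longrightarrow> f (R, t) \<le> 0"
    and g1: "\<And>s. s \<in> {e..R} \<Longrightarrow> g (s, e) > 0"
    and g2: "\<And>s. s \<in> {e..R} \<Longrightarrow> g (s, R) \<le> 0"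
  shows "\<exists>s t. s \<in> {e..R} \<and> t \<in> {e..R} \<and> f (s, t) = 0 \<and> g (s, t) = 0"
proof -
  define cl where "cl x = max e (min R x)" for x :: real
  define H where "H z = (cl (fst z + f z), cl (snd z + g z))" for z
  let ?S = "{e..R} \<times> {e..R}"
  have ccl: "continuous_on UNIV cl" unfolding cl_def by (intro continuous_intros)
  have "continuous_on ?S H"
    unfolding H_def
    by (intro continuous_on_Pair continuous_on_compose2[OF ccl] continuous_intros cf cg) auto
  moreover have "H \<in> ?S \<rightarrow> ?S" using el by (auto simp: H_def cl_def)
  moreover have "compact ?S" "convex ?S" "?S \<noteq> {}"
    using el by (auto intro!: compact_Times convex_Times)
  ultimately obtain z where z: "z \<in> ?S" "H z = z"
    using brouwer[of ?S H] by blast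
  obtain s t where st: "z = (s, t)" by force
  have fs: "cl (s + f (s, t)) = s" and gs: "cl (t + g (s, t)) = t"
    using z(2) st by (auto simp: H_def)
  have sI: "s \<in> {e..R}" and tI: "t \<in> {e..R}" using z st by auto
  have "f (s, t) = 0"
  proof -
    have "s \<noteq> e \<or> f (s,t) \<le> 0" using fs el unfolding cl_def by (auto split: if_splits simp: max_def min_def)
    then have ne: "s \<noteq> e" using f1[OF tI] by auto
    show ?thesis
    proof (cases "s = R")
      case True then show ?thesis using f2[OF tI] fs el unfolding cl_def by (auto simp: max_def min_def split: if_splits)
    next
      case False then show ?thesis using ne sI fs el unfolding cl_def by (auto simp: max_def min_def split: if_splits)
    qed
  qed
  moreover have "g (s, t) = 0"
  proof -
    have "t \<noteq> e \<or> g (s,t) \<le> 0" using gs el unfolding cl_def by (auto split: if_splits simp: max_def min_def)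
    then have ne: "t \<noteq> e" using g1[OF sI] by auto
    show ?thesis
    proof (cases "t = R")
      case True then show ?thesis using g2[OF sI] gs el unfolding cl_def by (auto simp: max_def min_def split: if_splits)
    next
      case False then show ?thesis using ne tI gs el unfolding cl_def by (auto simp: max_def min_def split: if_splits)
    qed
  qed
  ultimately show ?thesis using sI tI by blast
qed

lemma posp_nonneg: "posp u n \<ge> 0" by (simp add: posp_def)
lemma negp_nonpos: "negp u n \<le> 0" by (simp add: negp_def)
lemma posp_negp_sum: "posp u n + negp u n = u n" by (simp add: posp_def negp_def)
lemma posp_negp_mult: "posp u n * negp u n = 0" by (simp add: posp_def negp_def max_def min_def)
lemma fdiff_posp_negp: "fdiff (posp u) n + fdiff (negp u) n = fdiff u n"
  by (simp add: fdiff_def posp_def negp_def)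
lemma fdiff_posp_negp_sign: "fdiff (posp u) n * fdiff (negp u) n \<ge> 0"
  by (simp add: fdiff_def posp_def negp_def max_def min_def mult_nonneg_nonpos mult_nonpos_nonpos)

lemma same_sign_abs_le:
  fixes y z :: real
  assumes "y * z \<ge> 0"
  shows "\<bar>y\<bar> \<le> \<bar>y + z\<bar>" "\<bar>z\<bar> \<le> \<bar>y + z\<bar>"
  using assms by (auto simp: abs_if zero_le_mult_iff)

lemma fdiff_posp_le: "\<bar>fdiff (posp u) n\<bar> \<le> \<bar>fdiff u n\<bar>"
  using same_sign_abs_le(1)[OF fdiff_posp_negp_sign[of u n]] fdiff_posp_negp[of u n] by simp
lemma fdiff_negp_le: "\<bar>fdiff (negp u) n\<bar> \<le> \<bar>fdiff u n\<bar>"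
  using same_sign_abs_le(2)[OF fdiff_posp_negp_sign[of u n]] fdiff_posp_negp[of u n] by simp
lemma posp_le: "\<bar>posp u n\<bar> \<le> \<bar>u n\<bar>" by (simp add: posp_def)
lemma negp_le: "\<bar>negp u n\<bar> \<le> \<bar>u n\<bar>" by (simp add: negp_def)

lemma posp_uminus: "posp (\<lambda>n. - u n) = (\<lambda>n. - negp u n)"
  by (auto simp: posp_def negp_def fun_eq_iff)
lemma negp_uminus: "negp (\<lambda>n. - u n) = (\<lambda>n. - posp u n)"
  by (auto simp: posp_def negp_def fun_eq_iff)

lemma fdiff_scale: "fdiff (\<lambda>n. s * u n) n = s * fdiff u n"
  by (simp add: fdiff_def algebra_simps)
lemma fdiff_lin: "fdiff (\<lambda>n. s * u n + t * v n) n = s * fdiff u n + t * fdiff v n"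
  by (simp add: fdiff_def algebra_simps)

definition WW :: "(int \<Rightarrow> real) \<Rightarrow> real \<Rightarrow> real \<Rightarrow> int \<Rightarrow> real" where
  "WW u s t = (\<lambda>n. s * posp u n + t * negp u n)"

lemma posp_WW: "s \<ge> 0 \<Longrightarrow> t \<ge> 0 \<Longrightarrow> posp (WW u s t) = (\<lambda>n. s * posp u n)"
  by (auto simp: WW_def posp_def negp_def fun_eq_iff max_def min_def mult_nonneg_nonpos
      mult_le_0_iff zero_le_mult_iff)
lemma negp_WW: "s \<ge> 0 \<Longrightarrow> t \<ge> 0 \<Longrightarrow> negp (WW u s t) = (\<lambda>n. t * negp u n)"
  by (auto simp: WW_def posp_def negp_def fun_eq_iff max_def min_def mult_nonneg_nonpos
      mult_le_0_iff zero_le_mult_iff)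
lemma WW_uminus: "WW (\<lambda>n. - u n) t s = (\<lambda>n. - WW u s t n)"
  by (auto simp: WW_def posp_uminus negp_uminus fun_eq_iff)
lemma WW_one: "WW u 1 1 = u" by (auto simp: WW_def posp_negp_sum fun_eq_iff)

locale setting =
  fixes p q r :: real and a b c :: "int \<Rightarrow> real" and m :: nat and b0 :: real
  assumes p_def: "p = real m" and m_even: "even m" and m2: "2 \<le> m" and pq: "p < q" and r1: "1 \<le> r"
    and apos: "\<And>n. a n > 0" and bpos: "\<And>n. b n > 0" and cpos: "\<And>n. c n > 0"
    and b0pos: "b0 > 0" and bge: "\<And>n. b n \<ge> b0" and csum: "c summable_on UNIV"
begin

definition nt where "nt u n = a n * fdiff u n ^ m + b n * u n ^ m"
definition NN where "NN u = infsum (nt u) UNIV"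
definition ct where "ct u n = c n * \<bar>u n\<bar> powr q"
definition SS where "SS u = infsum (ct u) UNIV"
definition LL where "LL u = infsum (logterm q r c u) UNIV"
definition pt where "pt u v n = a n * fdiff u n ^ (m - 1) * fdiff v n + b n * u n ^ (m - 1) * v n"
definition PP where "PP u v = infsum (pt u v) UNIV"
definition qt where "qt u v n = (if u n = 0 then 0 else c n * \<bar>u n\<bar> powr (q - 2) * u n * v n * ln (\<bar>u n\<bar> powr r))"
definition QQ where "QQ u v = infsum (qt u v) UNIV"
abbreviation EE where "EE \<equiv> spaceE p a b"

lemma p_pos: "p > 1" using m2 p_def by simp
lemma q_pos: "q > 1" using p_pos pq by simp

lemma powr_p: "\<bar>x\<bar> powr p = x ^ m"
proof (cases "x = 0")
  case True then show ?thesis using m2 by simp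
next
  case False
  then have "\<bar>x\<bar> powr p = \<bar>x\<bar> ^ m" by (simp add: p_def powr_realpow)
  also have "\<dots> = x ^ m" using m_even by (simp add: power_even_abs)
  finally show ?thesis .
qed

lemma powr_pm2: "\<bar>x\<bar> powr (p - 2) * x = x ^ (m - 1)"
proof (cases "x = 0")
  case True then show ?thesis using m2 by simp
next
  case False
  have e: "even (m - 2)" using m_even m2 by simp
  have "p - 2 = real (m - 2)" using m2 p_def by simp
  then have "\<bar>x\<bar> powr (p - 2) = \<bar>x\<bar> ^ (m - 2)" using False by (simp add: powr_realpow)
  also have "\<dots> = x ^ (m - 2)" using e by (simp add: power_even_abs)
  finally have "\<bar>x\<bar> powr (p - 2) * x = x ^ (m - 2) * x" by simp
  also have "\<dots> = x ^ (m - 1)" using m2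
    by (metis Suc_diff_Suc Suc_1 diff_Suc_eq_diff_pred le_eq_less_or_eq less_eq_Suc_le power_Suc2 Suc_le_eq)
  finally show ?thesis .
qed

lemma normterm_eq: "normterm p a b u = nt u"
  by (simp add: fun_eq_iff normterm_def nt_def powr_p)

lemma evpow: "0 \<le> (x::real) ^ m"
  using m_even by (simp add: zero_le_even_power)

lemma nt_nonneg: "nt u n \<ge> 0"
  using apos[of n] bpos[of n] evpow[of "fdiff u n"] evpow[of "u n"] by (simp add: nt_def)

lemma NN_nonneg: "NN u \<ge> 0"
  unfolding NN_def by (rule infsum_nonneg) (simp add: nt_nonneg)

lemma EE_iff: "u \<in> EE \<longleftrightarrow> nt u summable_on UNIV"
  by (simp add: spaceE_def normterm_eq)

lemma dI_eq: "dI p q r a b c u v = PP u v - QQ u v"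
proof -
  have "(\<lambda>n. a n * \<bar>fdiff u n\<bar> powr (p - 2) * fdiff u n * fdiff v n
             + b n * \<bar>u n\<bar> powr (p - 2) * u n * v n) = pt u v"
  proof -
    have *: "w * \<bar>x\<bar> powr (p - 2) * x * y = w * x ^ (m - 1) * y" for w x y :: real
      using powr_pm2[of x] by (metis mult.assoc)
    show ?thesis by (simp add: fun_eq_iff pt_def *)
  qed
  then show ?thesis unfolding dI_def PP_def QQ_def qt_def by simp
qed

lemma logterm_eq: "logterm q r c u n = r * (if u n = 0 then 0 else c n * \<bar>u n\<bar> powr q * ln \<bar>u n\<bar>)"
  by (simp add: logterm_def ln_powr)

lemma nt_ge_b: "b0 * u n ^ m \<le> nt u n"
proof -
  have "b0 * u n ^ m \<le> b n * u n ^ m"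
    using bge[of n] evpow[of "u n"] by (intro mult_right_mono) auto
  moreover have "0 \<le> a n * fdiff u n ^ m" using apos[of n] evpow[of "fdiff u n"] by simp
  ultimately show ?thesis by (simp add: nt_def)
qed

lemma pow_bound: "\<bar>x\<bar> ^ m \<le> K \<Longrightarrow> \<bar>x::real\<bar> \<le> max 1 K"
proof (cases "\<bar>x\<bar> \<le> 1")
  case False
  assume K: "\<bar>x\<bar> ^ m \<le> K"
  have "\<bar>x\<bar> ^ 1 \<le> \<bar>x\<bar> ^ m" using False m2 by (intro power_increasing) auto
  then show ?thesis using K by simp
qed auto

lemma EE_bound:
  assumes "u \<in> EE"
  shows "\<bar>u n\<bar> \<le> max 1 (NN u / b0)"
proof -
  have "nt u n \<le> NN u"
    unfolding NN_def by (rule infsum_ge_term) (use assms EE_iff nt_nonneg in auto)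
  then have "b0 * \<bar>u n\<bar> ^ m \<le> NN u" using nt_ge_b[of u n] m_even by (simp add: power_even_abs)
  then have "\<bar>u n\<bar> ^ m \<le> NN u / b0" using b0pos by (simp add: field_simps)
  then show ?thesis by (rule pow_bound)
qed

lemma scalar_bound:
  fixes x R :: real
  assumes "0 < x" "x \<le> R" "1 \<le> R"
  shows "x powr q * \<bar>ln x\<bar> \<le> R powr (q + 1)" "x powr q \<le> R powr (q + 1)"
proof -
  have Rq: "x powr q \<le> R powr q" using assms q_pos by (intro powr_mono2) auto
  have Rq1: "R powr q \<le> R powr (q + 1)" using assms by (intro powr_mono) auto
  show "x powr q \<le> R powr (q + 1)" using Rq Rq1 by linarith
  show "x powr q * \<bar>ln x\<bar> \<le> R powr (q + 1)"
  proof (cases "x \<le> 1")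
    case True
    have l: "\<bar>ln x\<bar> \<le> 1 / x"
    proof -
      have "ln (1 / x) \<le> 1 / x - 1" using assms by (intro ln_le_minus_one) auto
      then have "- ln x \<le> 1 / x" using assms by (simp add: ln_div)
      moreover have "ln x \<le> 0" using True assms by simp
      ultimately show ?thesis by linarith
    qed
    have "x powr q * \<bar>ln x\<bar> \<le> x powr q * (1 / x)" using l by (intro mult_left_mono) auto
    also have "\<dots> = x powr (q - 1)" using assms by (simp add: powr_diff)
    also have "\<dots> \<le> 1 powr (q - 1)" using assms True q_pos by (intro powr_mono2) auto
    also have "\<dots> = 1" by simp
    also have "1 \<le> R powr (q + 1)" using assms q_pos by (intro ge_one_powr_ge_zero) auto
    finally show ?thesis .
  next
    case False
    have l: "\<bar>ln x\<bar> \<le> x" using False assms ln_le_minus_one[of x] by auto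
    have "x powr q * \<bar>ln x\<bar> \<le> x powr q * x" using l by (intro mult_left_mono) auto
    also have "\<dots> = x powr (q + 1)" using assms by (simp add: powr_add)
    also have "\<dots> \<le> R powr (q + 1)" using assms q_pos by (intro powr_mono2) auto
    finally show ?thesis .
  qed
qed

definition GG where "GG R n = r * c n * R powr (q + 1)"

lemma GG_summable: "GG R summable_on UNIV"
proof -
  have "(\<lambda>n. c n * (r * R powr (q + 1))) summable_on UNIV"
    by (rule summable_on_cmult_left[OF csum])
  then show ?thesis unfolding GG_def by (simp add: mult_ac)
qed

lemma logterm_bound:
  assumes "\<bar>u n\<bar> \<le> R" "1 \<le> R"
  shows "\<bar>logterm q r c u n\<bar> \<le> GG R n"
proof (cases "u n = 0")
  case True then show ?thesis using cpos[of n] r1 by (simp add: logterm_def GG_def)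
next
  case False
  have "\<bar>logterm q r c u n\<bar> = r * (c n * (\<bar>u n\<bar> powr q * \<bar>ln \<bar>u n\<bar>\<bar>))"
    using False cpos[of n] r1 by (simp add: logterm_eq abs_mult)
  also have "\<dots> \<le> r * (c n * R powr (q + 1))"
    using scalar_bound(1)[of "\<bar>u n\<bar>" R] assms False cpos[of n] r1
    by (intro mult_left_mono) auto
  finally show ?thesis by (simp add: GG_def mult_ac)
qed

lemma ct_bound:
  assumes "\<bar>u n\<bar> \<le> R" "1 \<le> R"
  shows "\<bar>ct u n\<bar> \<le> GG R n"
proof (cases "u n = 0")
  case True then show ?thesis using cpos[of n] r1 q_pos by (simp add: ct_def GG_def)
next
  case False
  have "\<bar>ct u n\<bar> = c n * \<bar>u n\<bar> powr q" using cpos[of n] by (simp add: ct_def)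
  also have "\<dots> \<le> c n * R powr (q + 1)"
    using scalar_bound(2)[of "\<bar>u n\<bar>" R] assms False cpos[of n] by (intro mult_left_mono) auto
  also have "\<dots> \<le> r * (c n * R powr (q + 1))"
    using mult_right_mono[OF r1, of "c n * R powr (q + 1)"] cpos[of n] by simp
  finally show ?thesis by (simp add: GG_def mult_ac)
qed

lemma EE_logterm_summable: "u \<in> EE \<Longrightarrow> logterm q r c u summable_on UNIV"
  by (rule dom_summable[OF GG_summable[of "max 1 (NN u / b0)"]])
     (auto intro!: logterm_bound EE_bound)

lemma EE_ct_summable: "u \<in> EE \<Longrightarrow> ct u summable_on UNIV"
  by (rule dom_summable[OF GG_summable[of "max 1 (NN u / b0)"]])
     (auto intro!: ct_bound EE_bound)

lemma domD_iff: "u \<in> domD p q r a b c \<longleftrightarrow> u \<in> EE"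
  by (auto simp: domD_def EE_logterm_summable)

lemma SS_nonneg: "SS u \<ge> 0"
  unfolding SS_def by (rule infsum_nonneg) (simp add: ct_def cpos less_imp_le)

lemma funcI_eq: "funcI p q r a b c u = NN u / p + r / q\<^sup>2 * SS u - LL u / q"
proof -
  have "normE p a b u powr p = NN u"
    unfolding normE_def NN_def normterm_eq powr_powr using p_pos NN_nonneg[of u]
    by (simp add: NN_def)
  then show ?thesis unfolding funcI_def SS_def LL_def ct_def by simp
qed

end

context setting begin

lemma pm1: "x ^ (m - 1) * x = (x::real) ^ m"
  using m2 by (metis Suc_diff_1 le_less_trans less_numeral_extra(1) one_less_numeral_iff power_Suc2 semiring_norm(76) zero_less_diff diff_less_mono2 not_le zero_less_one Suc_1 less_2_cases_iff)

lemma odd_mono: "x \<le> y \<Longrightarrow> (x::real) ^ (m - 1) \<le> y ^ (m - 1)"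
proof -
  have "odd (m - 1)" using m_even m2 by simp
  then show "x \<le> y \<Longrightarrow> x ^ (m - 1) \<le> y ^ (m - 1)" by (simp add: power_mono_odd)
qed

lemma abs_pow_m: "\<bar>x\<bar> ^ m = (x::real) ^ m"
  using m_even by (simp add: power_even_abs)

lemma pt_abs_bound:
  fixes x y :: real
  assumes "\<bar>y\<bar> \<le> \<bar>x\<bar>"
  shows "\<bar>x ^ (m - 1) * y\<bar> \<le> x ^ m"
proof -
  have "\<bar>x ^ (m - 1) * y\<bar> = \<bar>x\<bar> ^ (m - 1) * \<bar>y\<bar>" by (simp add: abs_mult power_abs)
  also have "\<dots> \<le> \<bar>x\<bar> ^ (m - 1) * \<bar>x\<bar>" using assms by (intro mult_left_mono) auto
  also have "\<dots> = x ^ m" using pm1[of "\<bar>x\<bar>"] abs_pow_m by simp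
  finally show ?thesis .
qed

lemma pt_lower:
  fixes y z :: real
  assumes "y * z \<ge> 0"
  shows "y ^ m \<le> (y + z) ^ (m - 1) * y"
proof (cases "y \<ge> 0")
  case True
  then have "z \<ge> 0 \<or> y = 0" using assms by (auto simp: zero_le_mult_iff)
  then show ?thesis
  proof
    assume z: "z \<ge> 0"
    have "y ^ (m - 1) \<le> (y + z) ^ (m - 1)" using z by (intro odd_mono) auto
    then have "y ^ (m - 1) * y \<le> (y + z) ^ (m - 1) * y" using True by (intro mult_right_mono) auto
    then show ?thesis using pm1[of y] by simp
  next
    assume "y = 0" then show ?thesis using m2 by (simp add: zero_power)
  qed
next
  case False
  then have z: "z \<le> 0" using assms by (auto simp: zero_le_mult_iff)
  have "(y + z) ^ (m - 1) \<le> y ^ (m - 1)" using z by (intro odd_mono) auto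
  then have "y ^ (m - 1) * y \<le> (y + z) ^ (m - 1) * y" using False by (intro mult_right_mono_neg) auto
  then show ?thesis using pm1[of y] by simp
qed

lemma nt_mono:
  assumes "\<And>n. \<bar>fdiff v n\<bar> \<le> K * \<bar>fdiff u n\<bar>" "\<And>n. \<bar>v n\<bar> \<le> K * \<bar>u n\<bar>" "0 \<le> K"
  shows "nt v n \<le> K ^ m * nt u n"
proof -
  have 1: "fdiff v n ^ m \<le> K ^ m * fdiff u n ^ m"
  proof -
    have "\<bar>fdiff v n\<bar> ^ m \<le> (K * \<bar>fdiff u n\<bar>) ^ m" using assms by (intro power_mono) auto
    then show ?thesis by (simp add: abs_pow_m power_mult_distrib abs_pow_m[of "fdiff u n"])
  qed
  have 2: "v n ^ m \<le> K ^ m * u n ^ m"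
  proof -
    have "\<bar>v n\<bar> ^ m \<le> (K * \<bar>u n\<bar>) ^ m" using assms by (intro power_mono) auto
    then show ?thesis by (simp add: abs_pow_m power_mult_distrib abs_pow_m[of "u n"])
  qed
  have "a n * fdiff v n ^ m \<le> a n * (K ^ m * fdiff u n ^ m)" using 1 apos[of n] by (intro mult_left_mono) auto
  moreover have "b n * v n ^ m \<le> b n * (K ^ m * u n ^ m)" using 2 bpos[of n] by (intro mult_left_mono) auto
  ultimately show ?thesis by (simp add: nt_def algebra_simps)
qed

lemma EE_mono:
  assumes "u \<in> EE" "\<And>n. \<bar>fdiff v n\<bar> \<le> K * \<bar>fdiff u n\<bar>" "\<And>n. \<bar>v n\<bar> \<le> K * \<bar>u n\<bar>" "0 \<le> K"
  shows "v \<in> EE"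
proof -
  have "(\<lambda>n. K ^ m * nt u n) summable_on UNIV"
    using assms(1) by (intro summable_on_cmult_right) (simp add: EE_iff)
  then show ?thesis unfolding EE_iff
    by (rule dom_summable) (use nt_mono[OF assms(2-4)] nt_nonneg in auto)
qed

lemma NN_mono:
  assumes "u \<in> EE" "\<And>n. \<bar>fdiff v n\<bar> \<le> K * \<bar>fdiff u n\<bar>" "\<And>n. \<bar>v n\<bar> \<le> K * \<bar>u n\<bar>" "0 \<le> K"
  shows "NN v \<le> K ^ m * NN u"
proof -
  have v: "v \<in> EE" by (rule EE_mono[OF assms])
  have "NN v \<le> infsum (\<lambda>n. K ^ m * nt u n) UNIV"
    unfolding NN_def
    by (rule infsum_mono) (use v assms(1) EE_iff nt_mono[OF assms(2-4)] in \<open>auto intro: summable_on_cmult_right\<close>)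
  also have "\<dots> = K ^ m * NN u" unfolding NN_def by (rule infsum_cmult_right) (use assms(1) EE_iff in auto)
  finally show ?thesis .
qed

lemma EE_posp: "u \<in> EE \<Longrightarrow> posp u \<in> EE"
  by (rule EE_mono[where K=1]) (auto simp: fdiff_posp_le posp_le)
lemma EE_negp: "u \<in> EE \<Longrightarrow> negp u \<in> EE"
  by (rule EE_mono[where K=1]) (auto simp: fdiff_negp_le negp_le)
lemma EE_uminus: "u \<in> EE \<Longrightarrow> (\<lambda>n. - u n) \<in> EE"
  by (rule EE_mono[where K=1]) (auto simp: fdiff_def)
lemma EE_scale: "u \<in> EE \<Longrightarrow> (\<lambda>n. s * u n) \<in> EE"
  by (rule EE_mono[where K="\<bar>s\<bar>"]) (auto simp: fdiff_scale abs_mult)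

lemma ww_scalar:
  fixes y z s t K :: real
  assumes "y * z \<ge> 0" "0 \<le> s" "0 \<le> t" "s \<le> K" "t \<le> K"
  shows "\<bar>s * y + t * z\<bar> \<le> K * \<bar>y + z\<bar>"
proof (cases "y \<ge> 0 \<and> z \<ge> 0")
  case True
  have "s * y \<le> K * y" "t * z \<le> K * z" using True assms by (auto intro: mult_right_mono)
  moreover have "0 \<le> s * y" "0 \<le> t * z" using True assms by auto
  ultimately show ?thesis using True by (simp add: distrib_left)
next
  case False
  then have yz: "y \<le> 0" "z \<le> 0" using assms(1) by (auto simp: zero_le_mult_iff)
  have "K * y \<le> s * y" "K * z \<le> t * z" using yz assms by (auto intro: mult_right_mono_neg)
  moreover have "s * y \<le> 0" "t * z \<le> 0" using yz assms by (auto simp: mult_nonneg_nonpos)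
  ultimately show ?thesis using yz by (cases "y = 0 \<and> z = 0") (auto simp: abs_if algebra_simps)
qed

lemma WW_bounds:
  assumes "0 \<le> s" "0 \<le> t" "s \<le> K" "t \<le> K"
  shows "\<bar>fdiff (WW u s t) n\<bar> \<le> K * \<bar>fdiff u n\<bar>" "\<bar>WW u s t n\<bar> \<le> K * \<bar>u n\<bar>"
proof -
  define y z where "y = fdiff (posp u) n" and "z = fdiff (negp u) n"
  have yz: "y * z \<ge> 0" "y + z = fdiff u n" using fdiff_posp_negp_sign fdiff_posp_negp y_def z_def by auto
  have f: "fdiff (WW u s t) n = s * y + t * z" unfolding WW_def y_def z_def by (rule fdiff_lin)
  have "\<bar>s * y + t * z\<bar> \<le> K * \<bar>y + z\<bar>" by (rule ww_scalar[OF yz(1) assms])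
  then show "\<bar>fdiff (WW u s t) n\<bar> \<le> K * \<bar>fdiff u n\<bar>" using f yz by simp
  show "\<bar>WW u s t n\<bar> \<le> K * \<bar>u n\<bar>"
    using assms by (cases "u n \<ge> 0") (auto simp: WW_def posp_def negp_def abs_mult intro: mult_right_mono)
qed

lemma EE_WW: "u \<in> EE \<Longrightarrow> 0 \<le> s \<Longrightarrow> 0 \<le> t \<Longrightarrow> WW u s t \<in> EE"
  by (rule EE_mono[where K="max s t"]) (auto intro!: WW_bounds)

end

context setting begin

lemma pt_bound:
  assumes "\<bar>fdiff v n\<bar> \<le> \<bar>fdiff u n\<bar>" "\<bar>v n\<bar> \<le> \<bar>u n\<bar>"
  shows "\<bar>pt u v n\<bar> \<le> nt u n"
proof -
  have 1: "\<bar>a n * fdiff u n ^ (m - 1) * fdiff v n\<bar> \<le> a n * fdiff u n ^ m"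
    using pt_abs_bound[OF assms(1)] apos[of n] by (simp add: abs_mult mult.assoc mult_left_mono)
  have 2: "\<bar>b n * u n ^ (m - 1) * v n\<bar> \<le> b n * u n ^ m"
    using pt_abs_bound[OF assms(2)] bpos[of n] by (simp add: abs_mult mult.assoc mult_left_mono)
  show ?thesis using 1 2 unfolding pt_def nt_def by linarith
qed

lemma pt_summable:
  assumes "u \<in> EE" "\<And>n. \<bar>fdiff v n\<bar> \<le> \<bar>fdiff u n\<bar>" "\<And>n. \<bar>v n\<bar> \<le> \<bar>u n\<bar>"
  shows "pt u v summable_on UNIV"
  by (rule dom_summable[of "nt u"]) (use assms EE_iff pt_bound in auto)

lemma pt_self: "pt u u n = nt u n"
  unfolding pt_def nt_def mult.assoc pm1 ..

lemma PP_self: "PP u u = NN u"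
  unfolding PP_def NN_def by (rule infsum_cong) (rule pt_self)

lemma pt_posp_lower: "nt (posp u) n \<le> pt u (posp u) n"
proof -
  have 1: "fdiff (posp u) n ^ m \<le> fdiff u n ^ (m - 1) * fdiff (posp u) n"
    using pt_lower[OF fdiff_posp_negp_sign[of u n]] fdiff_posp_negp[of u n] by simp
  have 2: "u n ^ (m - 1) * posp u n = posp u n ^ m"
    using m2 pm1[of "u n"] by (cases "u n \<ge> 0") (auto simp: posp_def zero_power)
  show ?thesis using 1 2 apos[of n] unfolding nt_def pt_def
    by (simp add: mult.assoc mult_left_mono)
qed

lemma pt_negp_lower: "nt (negp u) n \<le> pt u (negp u) n"
proof -
  have s: "fdiff (negp u) n * fdiff (posp u) n \<ge> 0" using fdiff_posp_negp_sign[of u n] by (simp add: mult.commute)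
  have 1: "fdiff (negp u) n ^ m \<le> fdiff u n ^ (m - 1) * fdiff (negp u) n"
    using pt_lower[OF s] fdiff_posp_negp[of u n] by (simp add: add.commute)
  have 2: "u n ^ (m - 1) * negp u n = negp u n ^ m"
    using m2 pm1[of "u n"] by (cases "u n \<le> 0") (auto simp: negp_def zero_power)
  show ?thesis using 1 2 apos[of n] unfolding nt_def pt_def
    by (simp add: mult.assoc mult_left_mono)
qed

lemma qt_part:
  assumes "v n = u n \<or> v n = 0"
  shows "qt u v n = logterm q r c v n"
proof (cases "u n = 0 \<or> v n = 0")
  case True then show ?thesis using assms by (auto simp: qt_def logterm_def)
next
  case False
  then have v: "v n = u n" and u0: "u n \<noteq> 0" using assms by auto
  have "\<bar>u n\<bar> powr (q - 2) * u n * u n = \<bar>u n\<bar> powr (q - 2) * \<bar>u n\<bar> powr 2"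
  proof -
    have "u n * u n = \<bar>u n\<bar> powr 2" using u0 by (simp add: powr_numeral power2_eq_square)
    then show ?thesis by (simp add: mult.assoc)
  qed
  also have "\<dots> = \<bar>u n\<bar> powr (q - 2 + 2)" by (rule powr_add[symmetric])
  also have "\<dots> = \<bar>u n\<bar> powr q" by simp
  finally have e: "\<bar>u n\<bar> powr (q - 2) * u n * u n = \<bar>u n\<bar> powr q" .
  have "qt u v n = c n * (\<bar>u n\<bar> powr (q - 2) * u n * u n) * ln (\<bar>u n\<bar> powr r)"
    using v u0 by (simp add: qt_def mult.assoc)
  then show ?thesis using v u0 e by (simp add: logterm_def)
qed

lemma QQ_self: "QQ u u = LL u"
  unfolding QQ_def LL_def by (rule infsum_cong) (rule qt_part, simp)
lemma QQ_posp: "QQ u (posp u) = LL (posp u)"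
  unfolding QQ_def LL_def by (rule infsum_cong) (rule qt_part, simp add: posp_def max_def)
lemma QQ_negp: "QQ u (negp u) = LL (negp u)"
  unfolding QQ_def LL_def by (rule infsum_cong) (rule qt_part, simp add: negp_def min_def)

lemma dI_self: "dI p q r a b c u u = NN u - LL u"
  by (simp add: dI_eq PP_self QQ_self)

lemma NN_posp_le: "u \<in> EE \<Longrightarrow> NN (posp u) \<le> PP u (posp u)"
  unfolding NN_def PP_def
  by (rule infsum_mono) (auto simp: EE_posp[unfolded EE_iff] EE_iff pt_posp_lower
      intro!: pt_summable fdiff_posp_le posp_le)

lemma NN_negp_le: "u \<in> EE \<Longrightarrow> NN (negp u) \<le> PP u (negp u)"
  unfolding NN_def PP_def
  by (rule infsum_mono) (auto simp: EE_negp[unfolded EE_iff] EE_iff pt_negp_lower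
      intro!: pt_summable fdiff_negp_le negp_le)

lemma logterm_split: "logterm q r c u n = logterm q r c (posp u) n + logterm q r c (negp u) n"
  by (cases "u n \<ge> 0") (auto simp: logterm_def posp_def negp_def)

lemma pt_split: "pt u u n = pt u (posp u) n + pt u (negp u) n"
proof -
  have "fdiff u n = fdiff (posp u) n + fdiff (negp u) n" by (simp add: fdiff_posp_negp)
  moreover have "u n = posp u n + negp u n" by (simp add: posp_negp_sum)
  ultimately show ?thesis unfolding pt_def by (simp add: algebra_simps)
qed

lemma dI_split:
  assumes "u \<in> EE"
  shows "dI p q r a b c u u = dI p q r a b c u (posp u) + dI p q r a b c u (negp u)"
proof -
  have "PP u u = infsum (\<lambda>n. pt u (posp u) n + pt u (negp u) n) UNIV"
    unfolding PP_def by (rule infsum_cong) (rule pt_split)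
  also have "\<dots> = PP u (posp u) + PP u (negp u)"
    unfolding PP_def
    by (rule infsum_add) (use assms in \<open>auto intro!: pt_summable fdiff_posp_le posp_le fdiff_negp_le negp_le\<close>)
  moreover have "LL u = infsum (\<lambda>n. logterm q r c (posp u) n + logterm q r c (negp u) n) UNIV"
    unfolding LL_def by (rule infsum_cong) (rule logterm_split)
  moreover have "\<dots> = LL (posp u) + LL (negp u)"
    unfolding LL_def
    by (rule infsum_add) (use assms in \<open>auto intro!: EE_logterm_summable EE_posp EE_negp\<close>)
  ultimately show ?thesis by (simp add: dI_eq QQ_self QQ_posp QQ_negp)
qed

end

context setting begin

lemma nt_scale: "nt (\<lambda>n. s * u n) n = s ^ m * nt u n"
  by (simp add: nt_def fdiff_scale power_mult_distrib algebra_simps)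

lemma NN_scale: "u \<in> EE \<Longrightarrow> NN (\<lambda>n. s * u n) = s ^ m * NN u"
  unfolding NN_def nt_scale by (rule infsum_cmult_right) (simp add: EE_iff)

lemma ct_scale: "0 \<le> s \<Longrightarrow> ct (\<lambda>n. s * u n) n = s powr q * ct u n"
  by (simp add: ct_def abs_mult powr_mult)

lemma SS_scale: "u \<in> EE \<Longrightarrow> 0 \<le> s \<Longrightarrow> SS (\<lambda>n. s * u n) = s powr q * SS u"
proof -
  assume u: "u \<in> EE" and s: "0 \<le> s"
  have "ct (\<lambda>n. s * u n) = (\<lambda>n. s powr q * ct u n)" using ct_scale[OF s] by (simp add: fun_eq_iff)
  then show ?thesis unfolding SS_def by (simp add: infsum_cmult_right EE_ct_summable u)
qed

lemma logterm_scale: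
  assumes "0 < s"
  shows "logterm q r c (\<lambda>n. s * u n) n = s powr q * (logterm q r c u n + r * ln s * ct u n)"
proof (cases "u n = 0")
  case True then show ?thesis using q_pos by (simp add: logterm_def ct_def)
next
  case False
  have "logterm q r c (\<lambda>n. s * u n) n = r * (c n * (s powr q * \<bar>u n\<bar> powr q) * (ln s + ln \<bar>u n\<bar>))"
    using assms False by (simp add: logterm_eq abs_mult powr_mult ln_mult)
  also have "\<dots> = s powr q * (logterm q r c u n + r * ln s * ct u n)"
    using False by (simp add: logterm_eq ct_def algebra_simps)
  finally show ?thesis .
qed

lemma LL_scale:
  assumes "u \<in> EE" "0 < s"
  shows "LL (\<lambda>n. s * u n) = s powr q * (LL u + r * ln s * SS u)"
proof -
  have "LL (\<lambda>n. s * u n) = infsum (\<lambda>n. s powr q * (logterm q r c u n + r * ln s * ct u n)) UNIV"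
    unfolding LL_def by (rule infsum_cong) (rule logterm_scale[OF assms(2)])
  also have "\<dots> = s powr q * infsum (\<lambda>n. logterm q r c u n + r * ln s * ct u n) UNIV"
    by (rule infsum_cmult_right) (intro summable_on_add summable_on_cmult_right EE_logterm_summable EE_ct_summable assms)
  also have "infsum (\<lambda>n. logterm q r c u n + r * ln s * ct u n) UNIV = LL u + infsum (\<lambda>n. r * ln s * ct u n) UNIV"
    unfolding LL_def
    by (rule infsum_add) (intro summable_on_add summable_on_cmult_right EE_logterm_summable EE_ct_summable assms)+
  also have "infsum (\<lambda>n. r * ln s * ct u n) UNIV = r * ln s * SS u"
    unfolding SS_def by (rule infsum_cmult_right) (intro EE_ct_summable assms)
  finally show ?thesis .
qed

lemma fdiff_uminus: "fdiff (\<lambda>n. - u n) n = - fdiff u n" by (simp add: fdiff_def)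

lemma pt_uminus: "pt (\<lambda>n. - u n) (\<lambda>n. - v n) n = pt u v n"
proof -
  have o: "odd (m - 1)" using m_even m2 by simp
  show ?thesis using o by (simp add: pt_def fdiff_uminus)
qed

lemma qt_uminus: "qt (\<lambda>n. - u n) (\<lambda>n. - v n) n = qt u v n"
  by (simp add: qt_def)

lemma dI_uminus: "dI p q r a b c (\<lambda>n. - u n) (\<lambda>n. - v n) = dI p q r a b c u v"
proof -
  have "pt (\<lambda>n. - u n) (\<lambda>n. - v n) = pt u v" "qt (\<lambda>n. - u n) (\<lambda>n. - v n) = qt u v"
    by (simp_all add: fun_eq_iff pt_uminus qt_uminus)
  then show ?thesis by (simp add: dI_eq PP_def QQ_def)
qed

lemma LL_uminus: "LL (\<lambda>n. - u n) = LL u"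
proof -
  have "logterm q r c (\<lambda>n. - u n) = logterm q r c u" by (simp add: fun_eq_iff logterm_def)
  then show ?thesis by (simp add: LL_def)
qed
lemma NN_uminus: "NN (\<lambda>n. - u n) = NN u"
proof -
  have "nt (\<lambda>n. - u n) = nt u" using m_even by (simp add: fun_eq_iff nt_def fdiff_uminus)
  then show ?thesis by (simp add: NN_def)
qed

lemma NN_pos:
  assumes "u \<in> EE" "u \<noteq> (\<lambda>_. 0)"
  shows "NN u > 0"
proof -
  obtain n where n: "u n \<noteq> 0" using assms(2) by auto
  have "0 < b0 * u n ^ m" using n b0pos m_even by (simp add: zero_less_power_eq)
  also have "\<dots> \<le> nt u n" by (rule nt_ge_b)
  also have "\<dots> \<le> NN u" unfolding NN_def by (rule infsum_ge_term) (use assms EE_iff nt_nonneg in auto)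
  finally show ?thesis .
qed

lemma b0_bound:
  assumes "v \<in> EE" "v \<noteq> (\<lambda>_. 0)" "NN v \<le> LL v"
  shows "b0 \<le> NN v"
proof (rule ccontr)
  assume "\<not> b0 \<le> NN v"
  then have small: "NN v < b0" by simp
  have lt1: "\<bar>v n\<bar> < 1" for n
  proof (rule ccontr)
    assume "\<not> \<bar>v n\<bar> < 1"
    then have "1 \<le> \<bar>v n\<bar> ^ m" by (simp add: one_le_power)
    then have "b0 \<le> b0 * v n ^ m" using b0pos abs_pow_m[of "v n"] by simp
    also have "\<dots> \<le> nt v n" by (rule nt_ge_b)
    also have "\<dots> \<le> NN v" unfolding NN_def by (rule infsum_ge_term) (use assms EE_iff nt_nonneg in auto)
    finally show False using small by simp
  qed
  have "logterm q r c v n \<le> 0" for n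
  proof (cases "v n = 0")
    case False
    have "ln \<bar>v n\<bar> < 0" using lt1[of n] False by simp
    then show ?thesis using False cpos[of n] r1
      by (simp add: logterm_eq mult_nonneg_nonpos mult_pos_neg)
  qed (simp add: logterm_def)
  then have "0 \<le> infsum (\<lambda>n. - logterm q r c v n) UNIV"
    by (intro infsum_nonneg) auto
  then have "LL v \<le> 0" by (simp add: LL_def infsum_uminus)
  then show False using NN_pos[OF assms(1,2)] assms(3) by simp
qed

lemma nehari_iff: "u \<in> nehari p q r a b c \<longleftrightarrow> u \<in> EE \<and> u \<noteq> (\<lambda>_. 0) \<and> NN u = LL u"
  by (auto simp: nehari_def domD_iff dI_self)

lemma signnehari_iff: "u \<in> signnehari p q r a b c \<longleftrightarrow> u \<in> EE \<and> posp u \<noteq> (\<lambda>_. 0) \<and> negp u \<noteq> (\<lambda>_. 0)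
   \<and> dI p q r a b c u (posp u) = 0 \<and> dI p q r a b c u (negp u) = 0"
  by (auto simp: signnehari_def domD_iff)

lemma posp_zero: "posp (\<lambda>_. 0) = (\<lambda>_. 0)" by (simp add: posp_def fun_eq_iff)

lemma M_sub_N: "u \<in> signnehari p q r a b c \<Longrightarrow> u \<in> nehari p q r a b c"
  unfolding signnehari_iff nehari_iff using dI_split[of u] dI_self[of u]
  by (auto simp: posp_zero)

definition kappa where "kappa = 1 / p - 1 / q"
lemma kappa_pos: "kappa > 0" using pq p_pos by (simp add: kappa_def field_simps)

lemma II_on_N: "NN u = LL u \<Longrightarrow> funcI p q r a b c u = kappa * NN u + r / q\<^sup>2 * SS u"
  by (simp add: funcI_eq kappa_def algebra_simps)

lemma II_N_lower: "u \<in> nehari p q r a b c \<Longrightarrow> kappa * b0 \<le> funcI p q r a b c u"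
proof -
  assume u: "u \<in> nehari p q r a b c"
  then have e: "u \<in> EE" "u \<noteq> (\<lambda>_. 0)" "NN u = LL u" by (auto simp: nehari_iff)
  have "b0 \<le> NN u" using b0_bound[OF e(1,2)] e(3) by simp
  then have "kappa * b0 \<le> kappa * NN u" using kappa_pos by simp
  moreover have "0 \<le> r / q\<^sup>2 * SS u" using SS_nonneg r1 by simp
  ultimately show ?thesis using II_on_N[OF e(3)] by simp
qed

end

context setting begin

lemma pt_bound2:
  assumes "\<bar>fdiff w n\<bar> \<le> \<bar>fdiff u n\<bar>" "\<bar>fdiff v n\<bar> \<le> \<bar>fdiff u n\<bar>" "\<bar>w n\<bar> \<le> \<bar>u n\<bar>" "\<bar>v n\<bar> \<le> \<bar>u n\<bar>"
  shows "\<bar>pt w v n\<bar> \<le> nt u n"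
proof -
  have g: "\<bar>x ^ (m - 1) * y\<bar> \<le> X ^ m" if "\<bar>x\<bar> \<le> \<bar>X\<bar>" "\<bar>y\<bar> \<le> \<bar>X\<bar>" for x y X :: real
  proof -
    have "\<bar>x ^ (m - 1) * y\<bar> = \<bar>x\<bar> ^ (m - 1) * \<bar>y\<bar>" by (simp add: abs_mult power_abs)
    also have "\<dots> \<le> \<bar>X\<bar> ^ (m - 1) * \<bar>X\<bar>" using that by (intro mult_mono power_mono) auto
    also have "\<dots> = X ^ m" using pm1[of "\<bar>X\<bar>"] abs_pow_m by simp
    finally show ?thesis .
  qed
  have 1: "\<bar>a n * fdiff w n ^ (m - 1) * fdiff v n\<bar> \<le> a n * fdiff u n ^ m"
    using g[OF assms(1,2)] apos[of n] by (simp add: abs_mult mult.assoc mult_left_mono)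
  have 2: "\<bar>b n * w n ^ (m - 1) * v n\<bar> \<le> b n * u n ^ m"
    using g[OF assms(3,4)] bpos[of n] by (simp add: abs_mult mult.assoc mult_left_mono)
  show ?thesis using 1 2 unfolding pt_def nt_def by linarith
qed

lemma pt_summable2:
  assumes "u \<in> EE" "\<And>n. \<bar>fdiff w n\<bar> \<le> \<bar>fdiff u n\<bar>" "\<And>n. \<bar>fdiff v n\<bar> \<le> \<bar>fdiff u n\<bar>"
    "\<And>n. \<bar>w n\<bar> \<le> \<bar>u n\<bar>" "\<And>n. \<bar>v n\<bar> \<le> \<bar>u n\<bar>"
  shows "pt w v summable_on UNIV"
  by (rule dom_summable[of "nt u"]) (use assms EE_iff pt_bound2 in auto)

lemma pt_WW_formula:
  "pt (WW u s t) (\<lambda>k. s * posp u k) n =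
     a n * (s * fdiff (posp u) n + t * fdiff (negp u) n) ^ (m - 1) * (s * fdiff (posp u) n)
     + b n * (s * posp u n + t * negp u n) ^ (m - 1) * (s * posp u n)"
  unfolding pt_def WW_def fdiff_lin fdiff_scale by simp

lemma PPp_cont:
  assumes u: "u \<in> EE" and S: "S \<subseteq> {0..1} \<times> {0..1}"
  shows "continuous_on S (\<lambda>z. PP (WW u (fst z) (snd z)) (\<lambda>k. fst z * posp u k))"
  unfolding continuous_on_def PP_def
proof
  fix z assume z: "z \<in> S"
  have bnd: "\<bar>pt (WW u (fst z') (snd z')) (\<lambda>k. fst z' * posp u k) n\<bar> \<le> nt u n" if "z' \<in> S" for z' n
  proof -
    obtain s t where st: "z' = (s, t)" by force
    have r: "0 \<le> s" "s \<le> 1" "0 \<le> t" "t \<le> 1" using S that st by auto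
    have "\<bar>fdiff (\<lambda>k. s * posp u k) n\<bar> \<le> \<bar>fdiff u n\<bar>"
      using fdiff_posp_le[of u n] r by (simp add: fdiff_scale abs_mult mult_le_one order_trans[OF mult_left_le_one_le])
    moreover have "\<bar>s * posp u n\<bar> \<le> \<bar>u n\<bar>"
      using posp_le[of u n] r by (simp add: abs_mult order_trans[OF mult_left_le_one_le])
    ultimately show ?thesis unfolding st fst_conv snd_conv
      using WW_bounds[of s t 1 u n] r by (intro pt_bound2) auto
  qed
  show "((\<lambda>z. infsum (pt (WW u (fst z) (snd z)) (\<lambda>k. fst z * posp u k)) UNIV) \<longlongrightarrow>
          infsum (pt (WW u (fst z) (snd z)) (\<lambda>k. fst z * posp u k)) UNIV) (at z within S)"
  proof (rule infsum_dom_conv[where g="nt u"])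
    show "nt u summable_on UNIV" using u by (simp add: EE_iff)
    have "eventually (\<lambda>z'. z' \<in> S) (at z within S)" unfolding eventually_at_filter by simp
    then show "\<forall>\<^sub>F z' in at z within S. \<forall>n. \<bar>pt (WW u (fst z') (snd z')) (\<lambda>k. fst z' * posp u k) n\<bar> \<le> nt u n"
      by eventually_elim (use bnd in auto)
    show "\<And>n. \<bar>pt (WW u (fst z) (snd z)) (\<lambda>k. fst z * posp u k) n\<bar> \<le> nt u n" using bnd z by auto
    fix n
    show "((\<lambda>z'. pt (WW u (fst z') (snd z')) (\<lambda>k. fst z' * posp u k) n) \<longlongrightarrow>
           pt (WW u (fst z) (snd z)) (\<lambda>k. fst z * posp u k) n) (at z within S)"
      unfolding pt_WW_formula by (intro tendsto_intros)
  qed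
qed

definition F1 where "F1 u z = dI p q r a b c (WW u (fst z) (snd z)) (posp (WW u (fst z) (snd z)))"

lemma F1_formula:
  assumes u: "u \<in> EE" and st: "0 < s" "0 \<le> t"
  shows "F1 u (s, t) = PP (WW u s t) (\<lambda>k. s * posp u k) - s powr q * (LL (posp u) + r * ln s * SS (posp u))"
proof -
  have q: "QQ (WW u s t) (posp (WW u s t)) = LL (posp (WW u s t))" by (rule QQ_posp)
  have "F1 u (s, t) = PP (WW u s t) (posp (WW u s t)) - LL (posp (WW u s t))"
    unfolding F1_def dI_eq using q by simp
  also have "\<dots> = PP (WW u s t) (\<lambda>k. s * posp u k) - LL (\<lambda>k. s * posp u k)"
    using st by (simp add: posp_WW)
  also have "LL (\<lambda>k. s * posp u k) = s powr q * (LL (posp u) + r * ln s * SS (posp u))"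
    by (rule LL_scale[OF EE_posp[OF u] st(1)])
  finally show ?thesis .
qed

lemma F1_cont:
  assumes u: "u \<in> EE" and e: "0 < e"
  shows "continuous_on ({e..1} \<times> {e..1}) (F1 u)"
proof -
  let ?S = "{e..1} \<times> {e..1}"
  have S: "?S \<subseteq> {0..1} \<times> {0..1}" using e by auto
  have "continuous_on ?S (\<lambda>z. PP (WW u (fst z) (snd z)) (\<lambda>k. fst z * posp u k)
           - fst z powr q * (LL (posp u) + r * ln (fst z) * SS (posp u)))"
    using e by (intro continuous_intros PPp_cont[OF u S]) auto
  then show ?thesis
    by (rule continuous_on_eq) (use e F1_formula[OF u] in auto)
qed

lemma small_e:
  fixes N :: real
  assumes "0 \<le> N"
  obtains e where "0 < e" "e < 1" "e ^ m * N < b0"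
proof -
  define e where "e = min (1/2) (b0 / (N + 1))"
  have e0: "0 < e" "e \<le> 1/2" using b0pos assms by (auto simp: e_def min_def)
  have "e ^ m \<le> e ^ 1" using e0 m2 by (intro power_decreasing) auto
  then have "e ^ m * N \<le> e * N" using assms by (simp add: mult_right_mono)
  also have "e * N \<le> b0 / (N + 1) * N" using assms by (intro mult_right_mono) (auto simp: e_def)
  also have "\<dots> < b0" using assms b0pos by (simp add: field_simps)
  finally show ?thesis using e0 that by auto
qed

lemma F1_pos:
  assumes u: "u \<in> EE" "posp u \<noteq> (\<lambda>_. 0)" and s: "0 < s" "s ^ m * NN (posp u) < b0" and t: "0 \<le> t"
  shows "F1 u (s, t) > 0"
proof -
  let ?W = "WW u s t" and ?v = "\<lambda>k. s * posp u k"
  have W: "?W \<in> EE" using EE_WW[OF u(1)] s t by simp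
  have pW: "posp ?W = ?v" using posp_WW s t by simp
  have v: "?v \<in> EE" by (rule EE_scale[OF EE_posp[OF u(1)]])
  have v0: "?v \<noteq> (\<lambda>_. 0)" using u(2) s by (auto simp: fun_eq_iff)
  have NNv: "NN ?v < b0" using NN_scale[OF EE_posp[OF u(1)]] s by simp
  have "\<not> NN ?v \<le> LL ?v" using b0_bound[OF v v0] NNv by auto
  then have "LL ?v < NN ?v" by simp
  also have "NN ?v \<le> PP ?W ?v" using NN_posp_le[OF W] pW by simp
  finally have "LL (posp ?W) < PP ?W (posp ?W)" using pW by simp
  moreover have "QQ ?W (posp ?W) = LL (posp ?W)" by (rule QQ_posp)
  ultimately show ?thesis unfolding F1_def dI_eq by simp
qed

lemma scalar_mono_t:
  fixes y z t :: real
  assumes "y * z \<ge> 0" "0 \<le> t" "t \<le> 1"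
  shows "(y + t * z) ^ (m - 1) * y \<le> (y + z) ^ (m - 1) * y"
proof (cases "y \<ge> 0")
  case True
  then have "z \<ge> 0 \<or> y = 0" using assms by (auto simp: zero_le_mult_iff)
  then show ?thesis
  proof
    assume z: "z \<ge> 0"
    have "t * z \<le> z" using z assms by (simp add: mult_left_le_one_le)
    then have "(y + t * z) ^ (m - 1) \<le> (y + z) ^ (m - 1)" by (intro odd_mono) auto
    then show ?thesis using True by (intro mult_right_mono) auto
  qed simp
next
  case False
  then have z: "z \<le> 0" using assms by (auto simp: zero_le_mult_iff)
  have "1 * z \<le> t * z" using z assms by (intro mult_right_mono_neg) auto
  then have "z \<le> t * z" by simp
  then have "(y + z) ^ (m - 1) \<le> (y + t * z) ^ (m - 1)" by (intro odd_mono) auto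
  then show ?thesis using False by (intro mult_right_mono_neg) auto
qed

lemma F1_one:
  assumes u: "u \<in> EE" and t: "0 \<le> t" "t \<le> 1"
  shows "F1 u (1, t) \<le> dI p q r a b c u (posp u)"
proof -
  have pt: "pt (WW u 1 t) (posp u) n \<le> pt u (posp u) n" for n
  proof -
    have 1: "fdiff (WW u 1 t) n = fdiff (posp u) n + t * fdiff (negp u) n"
      unfolding WW_def using fdiff_lin[of 1 "posp u" t "negp u" n] by simp
    have 2: "fdiff u n = fdiff (posp u) n + fdiff (negp u) n" by (simp add: fdiff_posp_negp)
    have a: "a n * (fdiff (WW u 1 t) n ^ (m - 1) * fdiff (posp u) n) \<le> a n * (fdiff u n ^ (m - 1) * fdiff (posp u) n)"
      unfolding 1 2 using scalar_mono_t[OF fdiff_posp_negp_sign t] apos[of n]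
      by (intro mult_left_mono) auto
    have b: "b n * (WW u 1 t n ^ (m - 1) * posp u n) = b n * (u n ^ (m - 1) * posp u n)"
      by (cases "u n \<ge> 0") (auto simp: WW_def posp_def negp_def)
    show ?thesis using a b unfolding pt_def mult.assoc by linarith
  qed
  have "PP (WW u 1 t) (posp u) \<le> PP u (posp u)"
    unfolding PP_def
    by (rule infsum_mono[OF _ _ pt])
       (auto intro!: pt_summable2[OF u] fdiff_posp_le posp_le
        simp: WW_bounds[of 1 t 1, simplified] t)
  moreover have "posp (WW u 1 t) = posp u" using posp_WW[of 1 t u] t by simp
  moreover have "QQ (WW u 1 t) (posp (WW u 1 t)) = LL (posp (WW u 1 t))" by (rule QQ_posp)
  ultimately show ?thesis unfolding F1_def dI_eq using QQ_posp[of u] by simp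
qed

end

context setting begin

lemma proj_M:
  assumes u: "u \<in> EE" "posp u \<noteq> (\<lambda>_. 0)" "negp u \<noteq> (\<lambda>_. 0)"
    and d1: "dI p q r a b c u (posp u) \<le> 0" and d2: "dI p q r a b c u (negp u) \<le> 0"
  shows "\<exists>s t. 0 < s \<and> s \<le> 1 \<and> 0 < t \<and> t \<le> 1 \<and> WW u s t \<in> signnehari p q r a b c"
proof -
  define v where "v = (\<lambda>n. - u n)"
  have v: "v \<in> EE" unfolding v_def by (rule EE_uminus[OF u(1)])
  have pv: "posp v = (\<lambda>n. - negp u n)" unfolding v_def by (rule posp_uminus)
  have v0: "posp v \<noteq> (\<lambda>_. 0)" using u(3) unfolding pv by (auto simp: fun_eq_iff)
  have "dI p q r a b c v (posp v) = dI p q r a b c (\<lambda>n. - u n) (\<lambda>n. - negp u n)"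
    unfolding pv by (simp add: v_def)
  also have "\<dots> = dI p q r a b c u (negp u)" by (rule dI_uminus)
  finally have dv: "dI p q r a b c v (posp v) \<le> 0" using d2 by simp
  obtain e where e: "0 < e" "e < 1" "e ^ m * max (NN (posp u)) (NN (posp v)) < b0"
    using small_e[of "max (NN (posp u)) (NN (posp v))"] NN_nonneg by (auto simp: le_max_iff_disj)
  have "e ^ m * NN (posp u) \<le> e ^ m * max (NN (posp u)) (NN (posp v))"
       "e ^ m * NN (posp v) \<le> e ^ m * max (NN (posp u)) (NN (posp v))"
    using e(1) by (intro mult_left_mono; simp)+
  then have eu: "e ^ m * NN (posp u) < b0" "e ^ m * NN (posp v) < b0" using e(3) by linarith+
  let ?S = "{e..1} \<times> {e..1}"
  have cg: "continuous_on ?S (\<lambda>z. F1 v (snd z, fst z))"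
  proof -
    have "continuous_on ?S (\<lambda>z. (snd z, fst z))" by (intro continuous_intros)
    moreover have "(\<lambda>z. (snd z, fst z)) ` ?S \<subseteq> ?S" by auto
    ultimately show ?thesis using continuous_on_compose2[OF F1_cont[OF v e(1)]] by blast
  qed
  have h1: "F1 u (e, t) > 0" if "t \<in> {e..1}" for t using F1_pos[OF u(1,2) e(1) eu(1)] that e(1) by auto
  have h2: "F1 u (1, t) \<le> 0" if "t \<in> {e..1}" for t using F1_one[OF u(1), of t] d1 that e(1) by auto
  have h3: "F1 v (e, s) > 0" if "s \<in> {e..1}" for s using F1_pos[OF v v0 e(1) eu(2)] that e(1) by auto
  have h4: "F1 v (1, s) \<le> 0" if "s \<in> {e..1}" for s using F1_one[OF v, of s] dv that e(1) by auto
  obtain s t where st: "s \<in> {e..1}" "t \<in> {e..1}" "F1 u (s, t) = 0" "F1 v (t, s) = 0"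
    using miranda[of e 1 "F1 u" "\<lambda>z. F1 v (snd z, fst z)", OF e(2) F1_cont[OF u(1) e(1)] cg h1 h2]
      h3 h4 by auto
  let ?W = "WW u s t"
  have s0: "0 < s" "s \<le> 1" "0 < t" "t \<le> 1" using st e by auto
  have W: "?W \<in> EE" using EE_WW[OF u(1)] s0 by simp
  have 1: "dI p q r a b c ?W (posp ?W) = 0" using st(3) by (simp add: F1_def)
  have "WW v t s = (\<lambda>n. - ?W n)" unfolding v_def by (rule WW_uminus)
  then have "dI p q r a b c (\<lambda>n. - ?W n) (\<lambda>n. - negp ?W n) = 0"
    using st(4) by (simp add: F1_def posp_uminus)
  then have 2: "dI p q r a b c ?W (negp ?W) = 0" by (simp add: dI_uminus)
  have 3: "posp ?W \<noteq> (\<lambda>_. 0)" using posp_WW[of s t u] s0 u(2) by (auto simp: fun_eq_iff)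
  have 4: "negp ?W \<noteq> (\<lambda>_. 0)" using negp_WW[of s t u] s0 u(3) by (auto simp: fun_eq_iff)
  show ?thesis using W 1 2 3 4 s0 by (auto simp: signnehari_iff)
qed

lemma proj_N:
  assumes u: "u \<in> EE" "u \<noteq> (\<lambda>_. 0)" and le: "NN u \<le> LL u"
  shows "\<exists>t. 0 < t \<and> t \<le> 1 \<and> (\<lambda>n. t * u n) \<in> nehari p q r a b c"
proof -
  define g where "g t = t ^ m * NN u - t powr q * (LL u + r * ln t * SS u)" for t
  have gt: "NN (\<lambda>n. t * u n) - LL (\<lambda>n. t * u n) = g t" if "0 < t" for t
    using NN_scale[OF u(1)] LL_scale[OF u(1) that] by (simp add: g_def)
  obtain e where e: "0 < e" "e < 1" "e ^ m * NN u < b0" using small_e[OF NN_nonneg] by blast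
  have ge: "g e > 0"
  proof (rule ccontr)
    assume "\<not> g e > 0"
    then have "NN (\<lambda>n. e * u n) \<le> LL (\<lambda>n. e * u n)" using gt[OF e(1)] by simp
    moreover have "(\<lambda>n. e * u n) \<noteq> (\<lambda>_. 0)" using u(2) e(1) by (auto simp: fun_eq_iff)
    ultimately have "b0 \<le> NN (\<lambda>n. e * u n)" using b0_bound EE_scale[OF u(1)] by blast
    then show False using e(3) NN_scale[OF u(1)] by simp
  qed
  have g1: "g 1 \<le> 0" using le by (simp add: g_def)
  have cont: "continuous_on {e..1} g"
    unfolding g_def using e(1) by (intro continuous_intros) auto
  obtain t where t: "e \<le> t" "t \<le> 1" "g t = 0"
    using IVT2'[of g 1 0 e, OF g1 _ _ cont] ge e by auto
  have t0: "0 < t" using t e by simp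
  have "(\<lambda>n. t * u n) \<in> nehari p q r a b c"
    unfolding nehari_iff using EE_scale[OF u(1)] gt[OF t0] t(3) u(2) t0 by (auto simp: fun_eq_iff)
  then show ?thesis using t0 t by auto
qed

end

context setting begin

lemma posp_scale: "0 \<le> x \<Longrightarrow> posp (\<lambda>n. x * v n) = (\<lambda>n. x * posp v n)"
  by (auto simp: posp_def fun_eq_iff max_def zero_le_mult_iff mult_le_0_iff)
lemma negp_scale: "0 \<le> x \<Longrightarrow> negp (\<lambda>n. x * v n) = (\<lambda>n. x * negp v n)"
  by (auto simp: negp_def fun_eq_iff min_def zero_le_mult_iff mult_le_0_iff)

lemma pow_scale2: "(x * X) ^ (m - 1) * (x * Y) = x ^ m * (X ^ (m - 1) * (Y::real))"
proof -
  have "(x * X) ^ (m - 1) * (x * Y) = (x ^ (m - 1) * x) * (X ^ (m - 1) * Y)"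
    by (simp add: power_mult_distrib mult_ac)
  then show ?thesis unfolding pm1 .
qed

lemma scale_dI:
  assumes v: "v \<in> EE" and x: "0 < x"
  shows "dI p q r a b c (\<lambda>n. x * v n) (posp (\<lambda>n. x * v n))
       = x ^ m * PP v (posp v) - x powr q * (LL (posp v) + r * ln x * SS (posp v))"
proof -
  have ps: "posp (\<lambda>n. x * v n) = (\<lambda>n. x * posp v n)" using posp_scale x by simp
  have q: "QQ (\<lambda>n. x * v n) (posp (\<lambda>n. x * v n)) = LL (posp (\<lambda>n. x * v n))" by (rule QQ_posp)
  have pt: "pt (\<lambda>n. x * v n) (\<lambda>n. x * posp v n) = (\<lambda>n. x ^ m * pt v (posp v) n)"
    unfolding pt_def fdiff_scale mult.assoc pow_scale2 by (simp add: fun_eq_iff algebra_simps)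
  have "PP (\<lambda>n. x * v n) (\<lambda>n. x * posp v n) = x ^ m * PP v (posp v)"
    unfolding PP_def pt by (rule infsum_cmult_right) (intro pt_summable v fdiff_posp_le posp_le)
  moreover have "LL (\<lambda>n. x * posp v n) = x powr q * (LL (posp v) + r * ln x * SS (posp v))"
    by (rule LL_scale[OF EE_posp[OF v] x])
  ultimately show ?thesis unfolding dI_eq using q ps by simp
qed

lemma SS_pos:
  assumes "v \<in> EE" "v \<noteq> (\<lambda>_. 0)"
  shows "SS v > 0"
proof -
  obtain n where n: "v n \<noteq> 0" using assms(2) by auto
  have "0 < ct v n" using n cpos[of n] by (simp add: ct_def)
  also have "\<dots> \<le> SS v" unfolding SS_def
    by (rule infsum_ge_term[OF EE_ct_summable[OF assms(1)]]) (simp add: ct_def cpos less_imp_le)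
  finally show ?thesis .
qed

lemma large_x:
  assumes v: "v \<in> EE" "posp v \<noteq> (\<lambda>_. 0)" and L: "LL (posp v) \<ge> 0"
  shows "\<exists>X>0. \<forall>x\<ge>X. dI p q r a b c (\<lambda>n. x * v n) (posp (\<lambda>n. x * v n)) \<le> 0"
proof -
  define P where "P = PP v (posp v)"
  define S where "S = SS (posp v)"
  have S: "S > 0" unfolding S_def by (rule SS_pos[OF EE_posp[OF v(1)] v(2)])
  define X where "X = max (exp 1) ((\<bar>P\<bar> / S + 1) powr (1 / (q - p)))"
  have qp: "q - p > 0" using pq by simp
  have X0: "X > 0" by (simp add: X_def less_max_iff_disj)
  have "\<forall>x\<ge>X. dI p q r a b c (\<lambda>n. x * v n) (posp (\<lambda>n. x * v n)) \<le> 0"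
  proof (intro allI impI)
    fix x assume xX: "X \<le> x"
    have x1: "exp 1 \<le> x" using xX by (simp add: X_def)
    have x0: "0 < x" using x1 exp_gt_zero[of 1] by linarith
    have lnx: "1 \<le> ln x" using x1 x0 by (metis ln_exp ln_le_cancel_iff exp_gt_zero)
    have "(\<bar>P\<bar> / S + 1) powr (1 / (q - p)) \<le> x" using xX by (simp add: X_def)
    then have "((\<bar>P\<bar> / S + 1) powr (1 / (q - p))) powr (q - p) \<le> x powr (q - p)"
      using qp by (intro powr_mono2) auto
    also have "((\<bar>P\<bar> / S + 1) powr (1 / (q - p))) powr (q - p) = \<bar>P\<bar> / S + 1"
      using qp S by (simp add: powr_powr)
    finally have xq: "\<bar>P\<bar> / S + 1 \<le> x powr (q - p)" .
    have xpq: "x powr q = x ^ m * x powr (q - p)"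
    proof -
      have "x powr q = x powr (p + (q - p))" by simp
      also have "\<dots> = x powr p * x powr (q - p)" by (rule powr_add)
      also have "x powr p = x ^ m" using x0 by (simp add: p_def powr_realpow)
      finally show ?thesis .
    qed
    have "\<bar>P\<bar> \<le> (\<bar>P\<bar> / S + 1) * S" using S by (simp add: field_simps)
    also have "\<dots> \<le> x powr (q - p) * S" using xq S by (intro mult_right_mono) auto
    finally have Pb: "\<bar>P\<bar> \<le> x powr (q - p) * S" .
    have xm: "0 \<le> x ^ m" using x0 by simp
    have "x ^ m * P \<le> x ^ m * (x powr (q - p) * S)" using Pb xm by (intro mult_left_mono) auto
    also have "\<dots> = x powr q * S" using xpq by simp
    also have "\<dots> \<le> x powr q * (LL (posp v) + r * ln x * S)"
    proof -
      have "1 \<le> r * ln x" using r1 lnx by (metis mult_mono' mult_1 zero_le_one order_trans)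
      then have "S \<le> r * ln x * S" using S by (simp add: mult_le_cancel_right1)
      then show ?thesis using L by (intro mult_left_mono) auto
    qed
    finally show "dI p q r a b c (\<lambda>n. x * v n) (posp (\<lambda>n. x * v n)) \<le> 0"
      using scale_dI[OF v(1) x0] by (simp add: P_def S_def)
  qed
  then show ?thesis using X0 by blast
qed

definition u0 :: "int \<Rightarrow> real" where "u0 n = (if n = 0 then 1 else if n = 1 then -1 else 0)"

lemma fin_supp_summable:
  fixes f :: "int \<Rightarrow> real"
  assumes "finite F" "\<And>n. n \<notin> F \<Longrightarrow> f n = 0"
  shows "f summable_on UNIV"
proof -
  have "f summable_on F" using assms(1) by simp
  then show ?thesis using summable_on_cong_neutral[of F UNIV f f] assms(2) by auto
qed

lemma u0_EE: "u0 \<in> EE"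
  unfolding EE_iff
proof (rule fin_supp_summable[of "{-1, 0, 1}"])
  fix n :: int assume "n \<notin> {-1, 0, 1}"
  then have "u0 n = 0" "u0 (n + 1) = 0" by (auto simp: u0_def)
  then show "nt u0 n = 0" using m2 by (simp add: nt_def fdiff_def zero_power)
qed simp

lemma M_nonempty: "signnehari p q r a b c \<noteq> {}"
proof -
  define w where "w = (\<lambda>n. - u0 n)"
  have w: "w \<in> EE" unfolding w_def by (rule EE_uminus[OF u0_EE])
  have "posp u0 0 = 1" "negp u0 1 = -1" "posp w 1 = 1" by (simp_all add: posp_def negp_def u0_def w_def)
  then have pu: "posp u0 \<noteq> (\<lambda>_. 0)" and nu: "negp u0 \<noteq> (\<lambda>_. 0)" and pw: "posp w \<noteq> (\<lambda>_. 0)"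
    by (auto dest: fun_cong)
  have Lu: "LL (posp u0) \<ge> 0"
  proof -
    have "logterm q r c (posp u0) = (\<lambda>_. 0)" by (auto simp: fun_eq_iff logterm_def posp_def u0_def)
    then show ?thesis by (simp add: LL_def)
  qed
  have Lw: "LL (posp w) \<ge> 0"
  proof -
    have "logterm q r c (posp w) = (\<lambda>_. 0)" by (auto simp: fun_eq_iff logterm_def posp_def u0_def w_def)
    then show ?thesis by (simp add: LL_def)
  qed
  obtain X1 where X1: "X1 > 0" "\<And>x. x \<ge> X1 \<Longrightarrow> dI p q r a b c (\<lambda>n. x * u0 n) (posp (\<lambda>n. x * u0 n)) \<le> 0"
    using large_x[OF u0_EE pu Lu] by blast
  obtain X2 where X2: "X2 > 0" "\<And>x. x \<ge> X2 \<Longrightarrow> dI p q r a b c (\<lambda>n. x * w n) (posp (\<lambda>n. x * w n)) \<le> 0"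
    using large_x[OF w pw Lw] by blast
  define x where "x = max X1 X2"
  have x0: "x > 0" using X1 by (simp add: x_def less_max_iff_disj)
  define u1 where "u1 = (\<lambda>n. x * u0 n)"
  have u1: "u1 \<in> EE" unfolding u1_def by (rule EE_scale[OF u0_EE])
  have d1: "dI p q r a b c u1 (posp u1) \<le> 0" unfolding u1_def by (rule X1(2)) (simp add: x_def)
  have mu1: "(\<lambda>n. - u1 n) = (\<lambda>n. x * w n)" by (simp add: u1_def w_def fun_eq_iff)
  have ng: "negp u1 = (\<lambda>n. - posp (\<lambda>n. - u1 n) n)" by (simp add: posp_uminus)
  have e1: "dI p q r a b c (\<lambda>n. - (- u1 n)) (\<lambda>n. - posp (\<lambda>n. - u1 n) n)
      = dI p q r a b c (\<lambda>n. - u1 n) (posp (\<lambda>n. - u1 n))" by (rule dI_uminus)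
  have "dI p q r a b c u1 (negp u1) = dI p q r a b c (\<lambda>n. - u1 n) (posp (\<lambda>n. - u1 n))"
    using e1 unfolding ng by simp
  also have "\<dots> \<le> 0" unfolding mu1 by (rule X2(2)) (simp add: x_def)
  finally have d2: "dI p q r a b c u1 (negp u1) \<le> 0" .
  have p1: "posp u1 \<noteq> (\<lambda>_. 0)" using pu x0 unfolding u1_def posp_scale[OF less_imp_le[OF x0]]
    by (auto simp: fun_eq_iff)
  have n1: "negp u1 \<noteq> (\<lambda>_. 0)" using nu x0 unfolding u1_def negp_scale[OF less_imp_le[OF x0]]
    by (auto simp: fun_eq_iff)
  show ?thesis using proj_M[OF u1 p1 n1 d1 d2] by blast
qed

end

context setting begin

definition phi where "phi x = (if x = 0 then 0 else \<bar>x\<bar> powr q * ln \<bar>x\<bar>)"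

lemma logterm_phi: "logterm q r c u n = r * c n * phi (u n)"
  by (simp add: logterm_eq phi_def)

lemma small_bound:
  fixes x :: real
  assumes "0 < x" "x \<le> 1"
  shows "x powr q * \<bar>ln x\<bar> \<le> x powr (q - 1)"
proof -
  have l: "\<bar>ln x\<bar> \<le> 1 / x"
  proof -
    have "ln (1 / x) \<le> 1 / x - 1" using assms by (intro ln_le_minus_one) auto
    then have "- ln x \<le> 1 / x" using assms by (simp add: ln_div)
    moreover have "ln x \<le> 0" using assms by simp
    ultimately show ?thesis by linarith
  qed
  have "x powr q * \<bar>ln x\<bar> \<le> x powr q * (1 / x)" using l by (intro mult_left_mono) auto
  also have "\<dots> = x powr (q - 1)" using assms by (simp add: powr_diff)
  finally show ?thesis .
qed

lemma tendsto_phi: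
  assumes f: "(f \<longlongrightarrow> y) F"
  shows "((\<lambda>k. phi (f k)) \<longlongrightarrow> phi y) F"
proof (cases "y = 0")
  case False
  have ev: "eventually (\<lambda>k. f k \<noteq> 0) F" by (rule tendsto_imp_eventually_ne[OF f False])
  have "((\<lambda>k. \<bar>f k\<bar> powr q * ln \<bar>f k\<bar>) \<longlongrightarrow> \<bar>y\<bar> powr q * ln \<bar>y\<bar>) F"
    using False by (intro tendsto_intros f) auto
  then have "((\<lambda>k. \<bar>f k\<bar> powr q * ln \<bar>f k\<bar>) \<longlongrightarrow> phi y) F" using False by (simp add: phi_def)
  then show ?thesis
    by (rule Lim_transform_eventually) (use ev in \<open>auto elim!: eventually_mono simp: phi_def\<close>)
next
  case True
  have f0: "(f \<longlongrightarrow> 0) F" using f True by simp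
  have a0: "((\<lambda>k. \<bar>f k\<bar>) \<longlongrightarrow> 0) F" using tendsto_rabs[OF f0] by simp
  have p0: "((\<lambda>k. \<bar>f k\<bar> powr (q - 1)) \<longlongrightarrow> 0) F"
    by (rule tendsto_zero_powrI[OF a0 tendsto_const]) (use q_pos in auto)
  have ev1: "eventually (\<lambda>k. \<bar>f k\<bar> < 1) F"
    using order_tendstoD(2)[OF a0, of 1] by simp
  have "eventually (\<lambda>k. norm (phi (f k)) \<le> norm (\<bar>f k\<bar> powr (q - 1)) * 1) F"
    using ev1
  proof eventually_elim
    case (elim k)
    show ?case
    proof (cases "f k = 0")
      case False
      then show ?thesis using small_bound[of "\<bar>f k\<bar>"] elim by (simp add: phi_def abs_mult)
    qed (simp add: phi_def)
  qed
  then have "((\<lambda>k. phi (f k)) \<longlongrightarrow> 0) F" by (rule tendsto_0_le[OF p0])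
  then show ?thesis using True by (simp add: phi_def)
qed

lemma conv_SS_LL:
  assumes w: "\<And>k. w k \<in> EE" and bnd: "\<And>k n. \<bar>w k n\<bar> \<le> R" and R: "1 \<le> R"
    and lim: "\<And>n. (\<lambda>k. w k n) \<longlonglongrightarrow> v n" and vb: "\<And>n. \<bar>v n\<bar> \<le> R"
  shows "(\<lambda>k. SS (w k)) \<longlonglongrightarrow> SS v" "(\<lambda>k. LL (w k)) \<longlonglongrightarrow> LL v"
proof -
  show "(\<lambda>k. SS (w k)) \<longlonglongrightarrow> SS v"
    unfolding SS_def
  proof (rule infsum_dom_conv[OF GG_summable[of R]])
    show "\<forall>\<^sub>F k in sequentially. \<forall>n. \<bar>ct (w k) n\<bar> \<le> GG R n" using ct_bound bnd R by auto
    show "\<bar>ct v n\<bar> \<le> GG R n" for n using ct_bound vb R by auto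
    show "(\<lambda>k. ct (w k) n) \<longlonglongrightarrow> ct v n" for n
      unfolding ct_def using q_pos by (intro tendsto_intros lim) auto
  qed
  show "(\<lambda>k. LL (w k)) \<longlonglongrightarrow> LL v"
    unfolding LL_def
  proof (rule infsum_dom_conv[OF GG_summable[of R]])
    show "\<forall>\<^sub>F k in sequentially. \<forall>n. \<bar>logterm q r c (w k) n\<bar> \<le> GG R n" using logterm_bound bnd R by auto
    show "\<bar>logterm q r c v n\<bar> \<le> GG R n" for n using logterm_bound vb R by auto
    show "(\<lambda>k. logterm q r c (w k) n) \<longlonglongrightarrow> logterm q r c v n" for n
      unfolding logterm_phi by (intro tendsto_intros tendsto_phi lim)
  qed
qed

lemma fatou_nt:
  assumes w: "\<And>k. w k \<in> EE" and lim: "\<And>n. (\<lambda>k. w k n) \<longlonglongrightarrow> v n"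
    and l: "(\<lambda>k. NN (w k)) \<longlonglongrightarrow> l"
  shows "v \<in> EE" "NN v \<le> l"
proof -
  have a: "\<And>k n. 0 \<le> nt (w k) n" by (rule nt_nonneg)
  have b: "\<And>k. nt (w k) summable_on UNIV" using w EE_iff by auto
  have c: "\<And>n. (\<lambda>k. nt (w k) n) \<longlonglongrightarrow> nt v n"
    unfolding nt_def fdiff_def by (intro tendsto_intros lim)
  have d: "(\<lambda>k. infsum (nt (w k)) UNIV) \<longlonglongrightarrow> l" using l by (simp add: NN_def)
  show "v \<in> EE" using infsum_fatou(1)[OF a b c d] by (simp add: EE_iff)
  show "NN v \<le> l" using infsum_fatou(2)[OF a b c d] by (simp add: NN_def)
qed

lemma fatou_pp:
  assumes w: "\<And>k. w k \<in> EE" and lim: "\<And>n. (\<lambda>k. w k n) \<longlonglongrightarrow> v n"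
    and l: "(\<lambda>k. PP (w k) (posp (w k))) \<longlonglongrightarrow> l"
  shows "PP v (posp v) \<le> l"
proof -
  have a: "\<And>k n. 0 \<le> pt (w k) (posp (w k)) n" by (rule order_trans[OF nt_nonneg pt_posp_lower])
  have b: "\<And>k. pt (w k) (posp (w k)) summable_on UNIV"
    using w by (intro pt_summable fdiff_posp_le posp_le) auto
  have c: "\<And>n. (\<lambda>k. pt (w k) (posp (w k)) n) \<longlonglongrightarrow> pt v (posp v) n"
    unfolding pt_def fdiff_def posp_def by (intro tendsto_intros lim)
  have d: "(\<lambda>k. infsum (pt (w k) (posp (w k))) UNIV) \<longlonglongrightarrow> l" using l by (simp add: PP_def)
  show ?thesis using infsum_fatou(2)[OF a b c d] by (simp add: PP_def)
qed

lemma fatou_pn: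
  assumes w: "\<And>k. w k \<in> EE" and lim: "\<And>n. (\<lambda>k. w k n) \<longlonglongrightarrow> v n"
    and l: "(\<lambda>k. PP (w k) (negp (w k))) \<longlonglongrightarrow> l"
  shows "PP v (negp v) \<le> l"
proof -
  have a: "\<And>k n. 0 \<le> pt (w k) (negp (w k)) n" by (rule order_trans[OF nt_nonneg pt_negp_lower])
  have b: "\<And>k. pt (w k) (negp (w k)) summable_on UNIV"
    using w by (intro pt_summable fdiff_negp_le negp_le) auto
  have c: "\<And>n. (\<lambda>k. pt (w k) (negp (w k)) n) \<longlonglongrightarrow> pt v (negp v) n"
    unfolding pt_def fdiff_def negp_def by (intro tendsto_intros lim)
  have d: "(\<lambda>k. infsum (pt (w k) (negp (w k))) UNIV) \<longlonglongrightarrow> l" using l by (simp add: PP_def)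
  show ?thesis using infsum_fatou(2)[OF a b c d] by (simp add: PP_def)
qed
lemma extract_seq:
  fixes u :: "nat \<Rightarrow> int \<Rightarrow> real"
  assumes u: "\<And>k. u k \<in> EE" and B: "\<And>k. NN (u k) \<le> B"
  obtains rr v where "strict_mono rr" "\<And>n. (\<lambda>k. u (rr k) n) \<longlonglongrightarrow> v n"
    "\<And>k n. \<bar>u k n\<bar> \<le> max 1 (B / b0)" "\<And>n. \<bar>v n\<bar> \<le> max 1 (B / b0)"
proof -
  define R where "R = max 1 (B / b0)"
  have bnd: "\<bar>u k n\<bar> \<le> R" for k n
  proof -
    have "NN (u k) / b0 \<le> B / b0" using B[of k] b0pos by (simp add: divide_right_mono)
    then show ?thesis using EE_bound[OF u, of k n] unfolding R_def by linarith
  qed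
  let ?S = "PiE UNIV (\<lambda>_::int. cball (0::real) R)"
  have cS: "compact ?S"
    using compactin_PiE[of "\<lambda>_. euclidean" UNIV "\<lambda>_::int. cball (0::real) R"]
    by (simp add: euclidean_product_topology)
  have inS: "u k \<in> ?S" for k using bnd by (auto simp: PiE_iff)
  obtain l rr where l: "l \<in> ?S" "strict_mono rr" "(u \<circ> rr) \<longlonglongrightarrow> l"
    using seq_compactE[OF compact_imp_seq_compact[OF cS], of u] inS by blast
  have pw: "(\<lambda>k. u (rr k) n) \<longlonglongrightarrow> l n" for n
  proof -
    have "((\<lambda>k. (u \<circ> rr) k n) \<longlongrightarrow> l n) sequentially"
      by (rule continuous_on_tendsto_compose[where f="\<lambda>x. x n" and s=UNIV, OF _ l(3)])
         (auto intro: continuous_on_product_coordinates)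
    then show ?thesis by simp
  qed
  have "\<bar>l n\<bar> \<le> R" for n using l(1) by (auto simp: PiE_iff)
  then show ?thesis using that[OF l(2) pw] bnd unfolding R_def by blast
qed

end

context setting begin

abbreviation "II \<equiv> funcI p q r a b c"
abbreviation "NSx \<equiv> nehari p q r a b c"
abbreviation "MSx \<equiv> signnehari p q r a b c"

lemma NSx_ne: "NSx \<noteq> {}" using M_nonempty M_sub_N by blast

lemma bdd_X: "X \<subseteq> NSx \<Longrightarrow> bdd_below (II ` X)"
  by (rule bdd_belowI2[where m="kappa * b0"]) (use II_N_lower in auto)

lemma Inf_X: "X \<subseteq> NSx \<Longrightarrow> X \<noteq> {} \<Longrightarrow> kappa * b0 \<le> Inf (II ` X)"
  by (rule cInf_greatest) (use II_N_lower in auto)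

lemma kb0_pos: "kappa * b0 > 0" using kappa_pos b0pos by simp

lemma min_seq:
  assumes "X \<noteq> {}" "bdd_below (II ` X)"
  obtains u :: "nat \<Rightarrow> int \<Rightarrow> real" where "\<And>k. u k \<in> X" "(\<lambda>k. II (u k)) \<longlonglongrightarrow> Inf (II ` X)"
    "\<And>k. II (u k) \<le> Inf (II ` X) + 1"
proof -
  let ?c = "Inf (II ` X)"
  have ex: "\<forall>k::nat. \<exists>y. y \<in> X \<and> II y < ?c + inverse (real (Suc k))"
  proof
    fix k :: nat
    have ne: "II ` X \<noteq> {}" using assms by auto
    have lt: "?c < ?c + inverse (real (Suc k))" by simp
    obtain z where z: "z \<in> II ` X" "z < ?c + inverse (real (Suc k))" using cInf_lessD[OF ne lt] by blast
    then obtain y where "y \<in> X" "z = II y" by blast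
    then show "\<exists>y. y \<in> X \<and> II y < ?c + inverse (real (Suc k))" using z by blast
  qed
  obtain u where u0: "\<forall>k. u k \<in> X \<and> II (u k) < ?c + inverse (real (Suc k))"
    using choice[OF ex] by blast
  then have u: "\<And>k. u k \<in> X" "\<And>k. II (u k) < ?c + inverse (real (Suc k))" by auto
  have lo: "?c \<le> II (u k)" for k using cInf_lower[OF imageI[OF u(1)] assms(2)] .
  have hi: "II (u k) \<le> ?c + 1" for k
  proof -
    have "inverse (real (Suc k)) \<le> 1" by (simp add: inverse_le_1_iff)
    then show ?thesis using u(2)[of k] by linarith
  qed
  have "(\<lambda>k. ?c + inverse (real (Suc k))) \<longlonglongrightarrow> ?c + 0"
    by (intro tendsto_intros LIMSEQ_inverse_real_of_nat)
  then have lim: "(\<lambda>k. ?c + inverse (real (Suc k))) \<longlonglongrightarrow> ?c" by simp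
  have hi2: "II (u k) \<le> ?c + inverse (real (Suc k))" for k using u(2)[of k] by linarith
  have ev1: "\<forall>\<^sub>F k in sequentially. ?c \<le> II (u k)" using lo by (intro always_eventually) auto
  have ev2: "\<forall>\<^sub>F k in sequentially. II (u k) \<le> ?c + inverse (real (Suc k))"
    using hi2 by (intro always_eventually) auto
  have "(\<lambda>k. II (u k)) \<longlonglongrightarrow> ?c"
    by (rule tendsto_sandwich[OF ev1 ev2 tendsto_const lim])
  then show ?thesis using that u(1) hi by blast
qed

lemma LL_zero: "LL (\<lambda>_. 0) = 0"
proof -
  have "logterm q r c (\<lambda>_. 0) = (\<lambda>_. 0)" by (simp add: fun_eq_iff logterm_def)
  then show ?thesis by (simp add: LL_def)
qed

lemma min_N: "\<exists>ub \<in> NSx. II ub = Inf (II ` NSx)"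
proof -
  let ?c = "Inf (II ` NSx)"
  obtain u where u: "\<And>k. u k \<in> NSx" "(\<lambda>k. II (u k)) \<longlonglongrightarrow> ?c" "\<And>k. II (u k) \<le> ?c + 1"
    using min_seq[OF NSx_ne bdd_X] by blast
  have uE: "u k \<in> EE" "u k \<noteq> (\<lambda>_. 0)" "NN (u k) = LL (u k)" for k using u(1)[of k] by (auto simp: nehari_iff)
  have IIu: "II (u k) = kappa * NN (u k) + r / q\<^sup>2 * SS (u k)" for k using II_on_N[OF uE(3)] .
  define B where "B = (?c + 1) / kappa"
  have NB: "NN (u k) \<le> B" for k
  proof -
    have "0 \<le> r / q\<^sup>2 * SS (u k)" using SS_nonneg[of "u k"] r1 by simp
    then have "kappa * NN (u k) \<le> ?c + 1" using IIu[of k] u(3)[of k] by linarith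
    then show ?thesis unfolding B_def using kappa_pos by (simp add: field_simps)
  qed
  obtain rr v where rr: "strict_mono rr" "\<And>n. (\<lambda>k. u (rr k) n) \<longlonglongrightarrow> v n"
    "\<And>k n. \<bar>u k n\<bar> \<le> max 1 (B / b0)" "\<And>n. \<bar>v n\<bar> \<le> max 1 (B / b0)"
    using extract_seq[of u B, OF uE(1) NB] by blast
  define w where "w k = u (rr k)" for k
  have wE: "w k \<in> EE" "w k \<noteq> (\<lambda>_. 0)" "NN (w k) = LL (w k)" for k using uE unfolding w_def by auto
  have wl: "\<And>n. (\<lambda>k. w k n) \<longlonglongrightarrow> v n" using rr(2) unfolding w_def .
  have wb: "\<And>k n. \<bar>w k n\<bar> \<le> max 1 (B / b0)" using rr(3) unfolding w_def by auto
  note cv = conv_SS_LL[OF wE(1) wb _ wl rr(4)]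
  have S: "(\<lambda>k. SS (w k)) \<longlonglongrightarrow> SS v" and L: "(\<lambda>k. LL (w k)) \<longlonglongrightarrow> LL v" using cv by auto
  have Nl: "(\<lambda>k. NN (w k)) \<longlonglongrightarrow> LL v" using L wE(3) by simp
  have vE: "v \<in> EE" and vNL: "NN v \<le> LL v" using fatou_nt[OF wE(1) wl Nl] by auto
  have Lb: "b0 \<le> LL v"
    by (rule tendsto_lowerbound[OF L]) (use b0_bound[OF wE(1,2)] wE(3) in auto)
  have v0: "v \<noteq> (\<lambda>_. 0)"
  proof
    assume "v = (\<lambda>_. 0)"
    then have "LL v = 0" using LL_zero by simp
    then show False using Lb b0pos by simp
  qed
  have IIw: "(\<lambda>k. II (w k)) \<longlonglongrightarrow> ?c" using LIMSEQ_subseq_LIMSEQ[OF u(2) rr(1)] unfolding w_def by (simp add: o_def)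
  have "(\<lambda>k. II (w k)) \<longlonglongrightarrow> kappa * LL v + r / q\<^sup>2 * SS v"
  proof -
    have "(\<lambda>k. kappa * LL (w k) + r / q\<^sup>2 * SS (w k)) \<longlonglongrightarrow> kappa * LL v + r / q\<^sup>2 * SS v"
      by (intro tendsto_intros L S)
    moreover have "II (w k) = kappa * LL (w k) + r / q\<^sup>2 * SS (w k)" for k
      using II_on_N[OF wE(3)] wE(3) by simp
    ultimately show ?thesis by simp
  qed
  then have ceq: "?c = kappa * LL v + r / q\<^sup>2 * SS v" by (rule LIMSEQ_unique[OF IIw])
  obtain t where t: "0 < t" "t \<le> 1" "(\<lambda>n. t * v n) \<in> NSx" using proj_N[OF vE v0 vNL] by blast
  have tv: "NN (\<lambda>n. t * v n) = LL (\<lambda>n. t * v n)" using t(3) by (simp add: nehari_iff)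
  have "II (\<lambda>n. t * v n) = kappa * (t ^ m * NN v) + r / q\<^sup>2 * (t powr q * SS v)"
    using II_on_N[OF tv] NN_scale[OF vE] SS_scale[OF vE] t(1) by simp
  also have "\<dots> \<le> kappa * NN v + r / q\<^sup>2 * SS v"
  proof -
    have "t ^ m * NN v \<le> 1 * NN v" using t NN_nonneg[of v] by (intro mult_right_mono power_le_one) auto
    moreover have "t powr q * SS v \<le> 1 * SS v"
    proof -
      have "t powr q \<le> 1 powr q" using t q_pos by (intro powr_mono2) auto
      then show ?thesis using SS_nonneg[of v] by (intro mult_right_mono) auto
    qed
    ultimately show ?thesis using kappa_pos r1 q_pos
      by (intro add_mono mult_left_mono) auto
  qed
  also have "\<dots> \<le> ?c" unfolding ceq using vNL kappa_pos by simp
  finally have le: "II (\<lambda>n. t * v n) \<le> ?c" .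
  have "?c \<le> II (\<lambda>n. t * v n)" by (rule cInf_lower[OF imageI[OF t(3)] bdd_X]) simp
  then show ?thesis using le t(3) by (intro bexI[of _ "\<lambda>n. t * v n"]) auto
qed

end

context setting begin

lemma MSx_sub: "MSx \<subseteq> NSx" using M_sub_N by blast

lemma posp_lim: "(\<lambda>k. w k n) \<longlonglongrightarrow> v n \<Longrightarrow> (\<lambda>k. posp (w k) n) \<longlonglongrightarrow> posp v n"
  unfolding posp_def by (intro tendsto_intros)
lemma negp_lim: "(\<lambda>k. w k n) \<longlonglongrightarrow> v n \<Longrightarrow> (\<lambda>k. negp (w k) n) \<longlonglongrightarrow> negp v n"
  unfolding negp_def by (intro tendsto_intros)

lemma part_facts:
  assumes w: "w \<in> EE" and d: "dI p q r a b c w (posp w) = 0" and p0: "posp w \<noteq> (\<lambda>_. 0)"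
  shows "PP w (posp w) = LL (posp w)" "b0 \<le> LL (posp w)"
proof -
  show e: "PP w (posp w) = LL (posp w)" using d by (simp add: dI_eq QQ_posp)
  have "NN (posp w) \<le> LL (posp w)" using NN_posp_le[OF w] e by simp
  moreover then have "b0 \<le> NN (posp w)" using b0_bound[OF EE_posp[OF w] p0] by simp
  ultimately show "b0 \<le> LL (posp w)" by simp
qed

lemma part_facts_n:
  assumes w: "w \<in> EE" and d: "dI p q r a b c w (negp w) = 0" and p0: "negp w \<noteq> (\<lambda>_. 0)"
  shows "PP w (negp w) = LL (negp w)" "b0 \<le> LL (negp w)"
proof -
  show e: "PP w (negp w) = LL (negp w)" using d by (simp add: dI_eq QQ_negp)
  have "NN (negp w) \<le> LL (negp w)" using NN_negp_le[OF w] e by simp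
  moreover then have "b0 \<le> NN (negp w)" using b0_bound[OF EE_negp[OF w] p0] by simp
  ultimately show "b0 \<le> LL (negp w)" by simp
qed

lemma min_M: "\<exists>u0 \<in> MSx. II u0 = Inf (II ` MSx)"
proof -
  let ?c = "Inf (II ` MSx)"
  obtain u where u: "\<And>k. u k \<in> MSx" "(\<lambda>k. II (u k)) \<longlonglongrightarrow> ?c" "\<And>k. II (u k) \<le> ?c + 1"
    using min_seq[OF M_nonempty bdd_X[OF MSx_sub]] by blast
  have uN: "u k \<in> NSx" for k using u(1) MSx_sub by blast
  have uE: "u k \<in> EE" "u k \<noteq> (\<lambda>_. 0)" "NN (u k) = LL (u k)" for k using uN[of k] by (auto simp: nehari_iff)
  have uM: "posp (u k) \<noteq> (\<lambda>_. 0)" "negp (u k) \<noteq> (\<lambda>_. 0)"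
    "dI p q r a b c (u k) (posp (u k)) = 0" "dI p q r a b c (u k) (negp (u k)) = 0" for k
    using u(1)[of k] by (auto simp: signnehari_iff)
  have IIu: "II (u k) = kappa * NN (u k) + r / q\<^sup>2 * SS (u k)" for k using II_on_N[OF uE(3)] .
  define B where "B = (?c + 1) / kappa"
  have NB: "NN (u k) \<le> B" for k
  proof -
    have "0 \<le> r / q\<^sup>2 * SS (u k)" using SS_nonneg[of "u k"] r1 by simp
    then have "kappa * NN (u k) \<le> ?c + 1" using IIu[of k] u(3)[of k] by linarith
    then show ?thesis unfolding B_def using kappa_pos by (simp add: field_simps)
  qed
  define R where "R = max 1 (B / b0)"
  have R1: "1 \<le> R" by (simp add: R_def)
  obtain rr v where rr: "strict_mono rr" "\<And>n. (\<lambda>k. u (rr k) n) \<longlonglongrightarrow> v n"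
    "\<And>k n. \<bar>u k n\<bar> \<le> R" "\<And>n. \<bar>v n\<bar> \<le> R"
    using extract_seq[of u B, OF uE(1) NB] unfolding R_def by blast
  define w where "w k = u (rr k)" for k
  have wE: "w k \<in> EE" "NN (w k) = LL (w k)" for k using uE unfolding w_def by auto
  have wM: "posp (w k) \<noteq> (\<lambda>_. 0)" "negp (w k) \<noteq> (\<lambda>_. 0)"
    "dI p q r a b c (w k) (posp (w k)) = 0" "dI p q r a b c (w k) (negp (w k)) = 0" for k
    using uM unfolding w_def by auto
  have wl: "\<And>n. (\<lambda>k. w k n) \<longlonglongrightarrow> v n" using rr(2) unfolding w_def .
  have wb: "\<And>k n. \<bar>w k n\<bar> \<le> R" using rr(3) unfolding w_def by auto
  have S: "(\<lambda>k. SS (w k)) \<longlonglongrightarrow> SS v" and L: "(\<lambda>k. LL (w k)) \<longlonglongrightarrow> LL v"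
    using conv_SS_LL[OF wE(1) wb R1 wl rr(4)] by auto
  have Lp: "(\<lambda>k. LL (posp (w k))) \<longlonglongrightarrow> LL (posp v)"
    using conv_SS_LL[of "\<lambda>k. posp (w k)" R "posp v", OF EE_posp[OF wE(1)] _ R1 posp_lim[OF wl]]
      order_trans[OF posp_le wb] order_trans[OF posp_le rr(4)] by auto
  have Ln: "(\<lambda>k. LL (negp (w k))) \<longlonglongrightarrow> LL (negp v)"
    using conv_SS_LL[of "\<lambda>k. negp (w k)" R "negp v", OF EE_negp[OF wE(1)] _ R1 negp_lim[OF wl]]
      order_trans[OF negp_le wb] order_trans[OF negp_le rr(4)] by auto
  have Nl: "(\<lambda>k. NN (w k)) \<longlonglongrightarrow> LL v" using L wE(2) by simp
  have vE: "v \<in> EE" and vNL: "NN v \<le> LL v" using fatou_nt[OF wE(1) wl Nl] by auto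
  have pf: "PP (w k) (posp (w k)) = LL (posp (w k))" "b0 \<le> LL (posp (w k))" for k
    using part_facts[OF wE(1) wM(3) wM(1)] by auto
  have nf: "PP (w k) (negp (w k)) = LL (negp (w k))" "b0 \<le> LL (negp (w k))" for k
    using part_facts_n[OF wE(1) wM(4) wM(2)] by auto
  have PPp: "PP v (posp v) \<le> LL (posp v)" using fatou_pp[OF wE(1) wl] Lp pf(1) by simp
  have PPn: "PP v (negp v) \<le> LL (negp v)" using fatou_pn[OF wE(1) wl] Ln nf(1) by simp
  have Lpb: "b0 \<le> LL (posp v)" by (rule tendsto_lowerbound[OF Lp]) (use pf(2) in auto)
  have Lnb: "b0 \<le> LL (negp v)" by (rule tendsto_lowerbound[OF Ln]) (use nf(2) in auto)
  have vp: "posp v \<noteq> (\<lambda>_. 0)"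
  proof
    assume "posp v = (\<lambda>_. 0)"
    then have "LL (posp v) = 0" using LL_zero by simp
    then show False using Lpb b0pos by simp
  qed
  have vn: "negp v \<noteq> (\<lambda>_. 0)"
  proof
    assume "negp v = (\<lambda>_. 0)"
    then have "LL (negp v) = 0" using LL_zero by simp
    then show False using Lnb b0pos by simp
  qed
  have d1: "dI p q r a b c v (posp v) \<le> 0" using PPp by (simp add: dI_eq QQ_posp)
  have d2: "dI p q r a b c v (negp v) \<le> 0" using PPn by (simp add: dI_eq QQ_negp)
  have IIw: "(\<lambda>k. II (w k)) \<longlonglongrightarrow> ?c" using LIMSEQ_subseq_LIMSEQ[OF u(2) rr(1)] unfolding w_def by (simp add: o_def)
  have "(\<lambda>k. II (w k)) \<longlonglongrightarrow> kappa * LL v + r / q\<^sup>2 * SS v"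
  proof -
    have "(\<lambda>k. kappa * LL (w k) + r / q\<^sup>2 * SS (w k)) \<longlonglongrightarrow> kappa * LL v + r / q\<^sup>2 * SS v"
      by (intro tendsto_intros L S)
    moreover have "II (w k) = kappa * LL (w k) + r / q\<^sup>2 * SS (w k)" for k
      using II_on_N[OF wE(2)] wE(2) by simp
    ultimately show ?thesis by simp
  qed
  then have ceq: "?c = kappa * LL v + r / q\<^sup>2 * SS v" by (rule LIMSEQ_unique[OF IIw])
  obtain s t where st: "0 < s" "s \<le> 1" "0 < t" "t \<le> 1" "WW v s t \<in> MSx"
    using proj_M[OF vE vp vn d1 d2] by blast
  let ?W = "WW v s t"
  have WN: "NN ?W = LL ?W" using MSx_sub st(5) by (auto simp: nehari_iff)
  have WE: "?W \<in> EE" using EE_WW[OF vE] st by simp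
  have NW: "NN ?W \<le> NN v"
    using NN_mono[OF vE, of ?W 1] WW_bounds[of s t 1 v] st by simp
  have SW: "SS ?W \<le> SS v"
    unfolding SS_def
  proof (rule infsum_mono[OF EE_ct_summable[OF WE] EE_ct_summable[OF vE]])
    fix n
    have "\<bar>?W n\<bar> \<le> \<bar>v n\<bar>" using WW_bounds(2)[of s t 1 v n] st by simp
    then have "\<bar>?W n\<bar> powr q \<le> \<bar>v n\<bar> powr q" using q_pos by (intro powr_mono2) auto
    then show "ct ?W n \<le> ct v n" unfolding ct_def using cpos[of n] by (intro mult_left_mono) auto
  qed
  have "II ?W = kappa * NN ?W + r / q\<^sup>2 * SS ?W" by (rule II_on_N[OF WN])
  also have "\<dots> \<le> kappa * NN v + r / q\<^sup>2 * SS v"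
    using NW SW kappa_pos r1 q_pos by (intro add_mono mult_left_mono) auto
  also have "\<dots> \<le> ?c" unfolding ceq using vNL kappa_pos by simp
  finally have le: "II ?W \<le> ?c" .
  have "?c \<le> II ?W" by (rule cInf_lower[OF imageI[OF st(5)] bdd_X[OF MSx_sub]])
  then show ?thesis using le st(5) by (intro bexI[of _ ?W]) auto
qed

end

theorem lemma2p9:
  fixes p q r :: real and a b c :: "int \<Rightarrow> real"
  assumes "1 < p" and "p < q" and "\<exists>k::nat. k \<ge> 1 \<and> p / 2 = real k" and "r \<ge> 1"
    and "\<And>n. a n > 0" and "\<And>n. b n > 0" and "\<And>n. c n > 0"
    and C1: "\<exists>b0 > 0. (\<forall>n. b n \<ge> b0) \<and> (\<forall>K. \<exists>N. \<forall>n. \<bar>n\<bar> \<ge> N \<longrightarrow> b n \<ge> K)"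
    and C2: "\<exists>c0 > 0. (\<forall>n. c n \<le> c0) \<and> c summable_on UNIV"
  shows "bdd_below (funcI p q r a b c ` signnehari p q r a b c)
       \<and> bdd_below (funcI p q r a b c ` nehari p q r a b c)
       \<and> Inf (funcI p q r a b c ` signnehari p q r a b c) > 0
       \<and> Inf (funcI p q r a b c ` nehari p q r a b c) > 0
       \<and> (\<exists>u0 \<in> signnehari p q r a b c.
            funcI p q r a b c u0 = Inf (funcI p q r a b c ` signnehari p q r a b c))
       \<and> (\<exists>ub \<in> nehari p q r a b c.
            funcI p q r a b c ub = Inf (funcI p q r a b c ` nehari p q r a b c))"
proof -
  obtain k :: nat where k: "k \<ge> 1" "p / 2 = real k" using assms(3) by blast
  obtain b0 where b0: "b0 > 0" "\<And>n. b n \<ge> b0" using C1 by blast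
  have cs: "c summable_on UNIV" using C2 by blast
  have pk: "p = real (2 * k)" using k(2) by simp
  interpret S: setting p q r a b c "2 * k" b0
  proof
    show "p = real (2 * k)" by (rule pk)
  qed (use assms k b0 cs in auto)
  have MN: "signnehari p q r a b c \<subseteq> nehari p q r a b c" using S.M_sub_N by blast
  have NN: "nehari p q r a b c \<subseteq> nehari p q r a b c" by simp
  have Mne: "signnehari p q r a b c \<noteq> {}" by (rule S.M_nonempty)
  have Nne: "nehari p q r a b c \<noteq> {}" using Mne MN by blast
  have "S.kappa * b0 \<le> Inf (funcI p q r a b c ` signnehari p q r a b c)" by (rule S.Inf_X[OF MN Mne])
  moreover have "S.kappa * b0 \<le> Inf (funcI p q r a b c ` nehari p q r a b c)" by (rule S.Inf_X[OF NN Nne])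
  ultimately show ?thesis using S.bdd_X[OF MN] S.bdd_X[OF NN] S.kb0_pos S.min_M S.min_N by auto
qed

end
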